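(* Under the standing assumptions below, let $F_0(\gamma,x,s)=(1+\sum_{i=1}^I\gamma^i)L$. Then there exists $F^*\in\mathcal N$ with $\|\mathcal B^{(n)}(F_0)-F^*\|_{\mathcal M}\to0$ as $n\to\infty$ (where $\mathcal B^{(n)}$ is the $n$-fold iterate), and $F^*$ is the largest fixed point of $\mathcal B$ in $\mathcal N$: $\mathcal B(F^* )=F^*$, and every $F\in\mathcal N$ with $\mathcal B(F)=F$ satisfies $F\le F^*$ pointwise.
   Context: Setup. Let $\mathcal S$ be a finite set and $(s_t)_{t\ge0}$ a Markov chain on $\mathcal S$ with transition probabilities $\pi(s'|s)>0$ for all $s,s'\in\mathcal S$; $\mathbb E_{s_t}$ denotes expectation over future shocks conditional on the history $s^t=(s_0,\dots,s_t)$. Let $\mathcal A\subset\mathbb R^n$ be a finite set, $\mathcal X\subseteq\mathbb R^m$ a countable set, $\zeta:\mathcal X\times\mathcal A\times\mathcal S\to\mathcal X$, $p:\mathcal X\times\mathcal A\times\mathcal S\to\mathbb R$, $r,g^1,\dots,g^I:\mathcal X\times\mathcal A\times\mathcal S\to\mathbb R$ bounded functions, $\bar g^1,\dots,\bar g^I\in\mathbb R$ and $\beta\in(0,1)$. A plan is a family $a=(a(s^t))_{t\ge0,\,s^t\in\mathcal S^{t+1}}$ with $a(s^t)\in\mathcal A$; given $x_0$ it induces states $x(s^0)=x_0$, $x(s^{t+1})=\zeta(x(s^t),a(s^t),s_t)$. Let $\tilde{\mathcal A}(x,s)=\{a\in\mathcal A:p(x,a,s)\ge0\}$ and $\tilde{\mathcal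 A}^\infty(x_0)$ the set of plans with $a(s^t)\in\tilde{\mathcal A}(x(s^t),s_t)$ for all $t,s^t$. A plan is feasible for $(x_0,s_0)$ if it lies in $\tilde{\mathcal A}^\infty(x_0)$ and $\mathbb E_{s_t}\sum_{n\ge0}\beta^ng^i(x(s^{t+n}),a(s^{t+n}),s_{t+n})\ge\bar g^i$ for all $t,s^t,i$. Standing assumption: for every $(x_0,s_0)$ a feasible plan exists. Function spaces. Let $L=(\|r\|_\infty+\sum_{i=1}^I\|g^i\|_\infty)/(1-\beta)$, $B(k)=\{\gamma\in\mathbb R^I_+:\|\gamma\|_\infty\le k\}$, and enumerate $\mathcal S=\{s_1,\dots,s_{|\mathcal S|}\}$, $\mathcal X=\{x_1,x_2,\dots\}$. $\mathcal M$ is the set of $F:\mathbb R^I_+\times\mathcal X\times\mathcal S\to\mathbb R$ with $F(\cdot,x,s)\in L^\infty(B(k))$ for all $k\in\mathbb N_+$, $x,s$, and $\|F\|_{\mathcal M}:=\sum_{i}2^{-i}\sum_j2^{-j}\sum_{k\ge1}2^{-k}\|F(\cdot,x_j,s_i)\|_{L^\infty(B(k))}<\infty$. $\mathcal N\subset\mathcal M$ is the set of $F\in\mathcal M$ such that for all $x,s$: (i) $F(\cdot,x,s)$ is convex; (ii) $|F(\gamma_1,x,s)-F(\gamma_2,x,s)|\le L\|\gamma_1-\gamma_2\|_1$; (iii) $F(\gamma,x,s)\ge v^0+\sum_i\gamma^iv^i$ for every feasible plan for $(x,s)$, where $v^0=\mathbb E_{s}\sum_t\beta^tr(x(s^t),a(s^t),s_t)$,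 $v^i=\mathbb E_s\sum_t\beta^tg^i(x(s^t),a(s^t),s_t)$ (with $x_0=x,s_0=s$); (iv) $F(\gamma,x,s)\le(1+\sum_i\gamma^i)L$. Bellman operator: for $F:\mathbb R^I_+\times\mathcal X\times\mathcal S\to\mathbb R$, $\mathcal B(F)(\gamma,x,s)=\inf_{\lambda\in\mathbb R^I_+}\sup_{a\in\tilde{\mathcal A}(x,s)}\big[r(x,a,s)+\sum_i(\gamma^ig^i(x,a,s)+\lambda^i(g^i(x,a,s)-\bar g^i))+\beta\mathbb E_sF(\gamma+\lambda,\zeta(x,a,s),s')\big]$, where $\mathbb E_s$ is expectation over $s'\sim\pi(\cdot|s)$. *)

theory Defs
  imports "HOL-Analysis.Analysis" "HOL-Probability.Essential_Supremum"
begin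

definition nonneg_orth :: "(real^'i) set" where
  "nonneg_orth = {\<gamma>. \<forall>i. 0 \<le> \<gamma>$i}"

definition boxB :: "nat \<Rightarrow> (real^'i) set" where
  "boxB k = {\<gamma>. \<forall>i. 0 \<le> \<gamma>$i \<and> \<gamma>$i \<le> real k}"

definition Linf_norm :: "nat \<Rightarrow> (real^'i \<Rightarrow> real) \<Rightarrow> ereal" where
  "Linf_norm k f = esssup (lebesgue_on (boxB k)) (\<lambda>\<gamma>. ereal \<bar>f \<gamma>\<bar>)"

definition in_Linf :: "nat \<Rightarrow> (real^'i \<Rightarrow> real) \<Rightarrow> bool" where
  "in_Linf k f \<longleftrightarrow> f \<in> borel_measurable (lebesgue_on (boxB k)) \<and> Linf_norm k f < \<infinity>"

text \<open>The norm of M. States are enumerated by se on {1..|S|}; the countable set X is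
  enumerated by xe on an index set Jx (either {1..} or {1..k}).\<close>
definition normM :: "(nat \<Rightarrow> 's::finite) \<Rightarrow> (nat \<Rightarrow> 'x) \<Rightarrow> nat set
     \<Rightarrow> (real^'i \<Rightarrow> 'x \<Rightarrow> 's \<Rightarrow> real) \<Rightarrow> ennreal" where
  "normM se xe Jx F =
     (\<Sum>i\<in>{1..CARD('s)}. ennreal ((1/2)^i) *
        (\<Sum>j. if j \<in> Jx then ennreal ((1/2)^j) *
               (\<Sum>k. ennreal ((1/2)^(Suc k)) *
                     e2ennreal (Linf_norm (Suc k) (\<lambda>\<gamma>. F \<gamma> (xe j) (se i))))
             else 0))"

definition in_M :: "(nat \<Rightarrow> 's::finite) \<Rightarrow> (nat \<Rightarrow> 'x) \<Rightarrow> nat set \<Rightarrow> 'x set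
     \<Rightarrow> (real^'i \<Rightarrow> 'x \<Rightarrow> 's \<Rightarrow> real) \<Rightarrow> bool" where
  "in_M se xe Jx Xset F \<longleftrightarrow>
     (\<forall>x\<in>Xset. \<forall>s. \<forall>k\<ge>1. in_Linf k (\<lambda>\<gamma>. F \<gamma> x s)) \<and> normM se xe Jx F < \<infinity>"

text \<open>A history s^t = (s_0,...,s_t) is a nonempty list. trajr works on the reversed history.\<close>
fun trajr :: "('x \<Rightarrow> 'a \<Rightarrow> 's \<Rightarrow> 'x) \<Rightarrow> ('s list \<Rightarrow> 'a) \<Rightarrow> 'x \<Rightarrow> 's list \<Rightarrow> 'x" where
  "trajr \<zeta> a x0 [] = x0"
| "trajr \<zeta> a x0 [s] = x0"
| "trajr \<zeta> a x0 (s # s' # r) = \<zeta> (trajr \<zeta> a x0 (s' # r)) (a (rev (s' # r))) s'"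

text \<open>x(s^t) induced by plan a from x0: x(s^0)=x0, x(s^{t+1}) = zeta(x(s^t),a(s^t),s_t).\<close>
definition traj :: "('x \<Rightarrow> 'a \<Rightarrow> 's \<Rightarrow> 'x) \<Rightarrow> ('s list \<Rightarrow> 'a) \<Rightarrow> 'x \<Rightarrow> 's list \<Rightarrow> 'x" where
  "traj \<zeta> a x0 h = trajr \<zeta> a x0 (rev h)"

text \<open>P s s' is the transition probability pi(s'|s).\<close>
fun pathprob :: "('s \<Rightarrow> 's \<Rightarrow> real) \<Rightarrow> 's \<Rightarrow> 's list \<Rightarrow> real" where
  "pathprob P s [] = 1"
| "pathprob P s (s' # e) = P s s' * pathprob P s' e"

definition cexp :: "('s::finite \<Rightarrow> 's \<Rightarrow> real) \<Rightarrow> 's list \<Rightarrow> nat \<Rightarrow> ('s list \<Rightarrow> real) \<Rightarrow> real" where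
  "cexp P h n f = (\<Sum>e\<in>{e. length e = n}. pathprob P (last h) e * f (h @ e))"

definition contval :: "('s::finite \<Rightarrow> 's \<Rightarrow> real) \<Rightarrow> real \<Rightarrow> ('x \<Rightarrow> 'a \<Rightarrow> 's \<Rightarrow> 'x) \<Rightarrow> 'x
     \<Rightarrow> ('s list \<Rightarrow> 'a) \<Rightarrow> ('x \<Rightarrow> 'a \<Rightarrow> 's \<Rightarrow> real) \<Rightarrow> 's list \<Rightarrow> real" where
  "contval P \<beta> \<zeta> x0 a u h =
     (\<Sum>n. \<beta>^n * cexp P h n (\<lambda>h'. u (traj \<zeta> a x0 h') (a h') (last h')))"

definition admissible :: "'a set \<Rightarrow> ('x \<Rightarrow> 'a \<Rightarrow> 's \<Rightarrow> real) \<Rightarrow> ('x \<Rightarrow> 'a \<Rightarrow> 's \<Rightarrow> 'x)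
     \<Rightarrow> 'x \<Rightarrow> 's \<Rightarrow> ('s list \<Rightarrow> 'a) \<Rightarrow> bool" where
  "admissible Aset p \<zeta> x0 s0 a \<longleftrightarrow>
     (\<forall>h. h \<noteq> [] \<and> hd h = s0 \<longrightarrow> a h \<in> Aset \<and> 0 \<le> p (traj \<zeta> a x0 h) (a h) (last h))"

definition feasible :: "('s::finite \<Rightarrow> 's \<Rightarrow> real) \<Rightarrow> real \<Rightarrow> ('x \<Rightarrow> 'a \<Rightarrow> 's \<Rightarrow> 'x) \<Rightarrow> 'a set
     \<Rightarrow> ('x \<Rightarrow> 'a \<Rightarrow> 's \<Rightarrow> real) \<Rightarrow> ('i \<Rightarrow> 'x \<Rightarrow> 'a \<Rightarrow> 's \<Rightarrow> real) \<Rightarrow> ('i \<Rightarrow> real)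
     \<Rightarrow> 'x \<Rightarrow> 's \<Rightarrow> ('s list \<Rightarrow> 'a) \<Rightarrow> bool" where
  "feasible P \<beta> \<zeta> Aset p g gbar x0 s0 a \<longleftrightarrow>
     admissible Aset p \<zeta> x0 s0 a \<and>
     (\<forall>h i. h \<noteq> [] \<and> hd h = s0 \<longrightarrow> gbar i \<le> contval P \<beta> \<zeta> x0 a (g i) h)"

definition Lconst :: "'x set \<Rightarrow> 'a set \<Rightarrow> real \<Rightarrow> ('x \<Rightarrow> 'a \<Rightarrow> 's::finite \<Rightarrow> real)
     \<Rightarrow> ('i::finite \<Rightarrow> 'x \<Rightarrow> 'a \<Rightarrow> 's \<Rightarrow> real) \<Rightarrow> real" where
  "Lconst Xset Aset \<beta> r g =
     ((SUP (x,a,s)\<in>Xset \<times> Aset \<times> UNIV. \<bar>r x a s\<bar>)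
      + (\<Sum>i\<in>UNIV. SUP (x,a,s)\<in>Xset \<times> Aset \<times> UNIV. \<bar>g i x a s\<bar>)) / (1 - \<beta>)"

definition bellman :: "('s::finite \<Rightarrow> 's \<Rightarrow> real) \<Rightarrow> real \<Rightarrow> ('x \<Rightarrow> 'a \<Rightarrow> 's \<Rightarrow> 'x) \<Rightarrow> 'a set
     \<Rightarrow> ('x \<Rightarrow> 'a \<Rightarrow> 's \<Rightarrow> real) \<Rightarrow> ('x \<Rightarrow> 'a \<Rightarrow> 's \<Rightarrow> real)
     \<Rightarrow> ('i::finite \<Rightarrow> 'x \<Rightarrow> 'a \<Rightarrow> 's \<Rightarrow> real) \<Rightarrow> ('i \<Rightarrow> real)
     \<Rightarrow> (real^'i \<Rightarrow> 'x \<Rightarrow> 's \<Rightarrow> real) \<Rightarrow> (real^'i \<Rightarrow> 'x \<Rightarrow> 's \<Rightarrow> real)" where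
  "bellman P \<beta> \<zeta> Aset p r g gbar F \<gamma> x s =
     (INF lam\<in>nonneg_orth.
        Sup ((\<lambda>a. r x a s
                  + (\<Sum>i\<in>UNIV. \<gamma>$i * g i x a s + lam$i * (g i x a s - gbar i))
                  + \<beta> * (\<Sum>s'\<in>UNIV. P s s' * F (\<gamma> + lam) (\<zeta> x a s) s'))
             ` {a \<in> Aset. 0 \<le> p x a s}))"

definition in_N :: "(nat \<Rightarrow> 's::finite) \<Rightarrow> (nat \<Rightarrow> 'x) \<Rightarrow> nat set \<Rightarrow> 'x set
     \<Rightarrow> ('s \<Rightarrow> 's \<Rightarrow> real) \<Rightarrow> real \<Rightarrow> ('x \<Rightarrow> 'a \<Rightarrow> 's \<Rightarrow> 'x) \<Rightarrow> 'a set
     \<Rightarrow> ('x \<Rightarrow> 'a \<Rightarrow> 's \<Rightarrow> real) \<Rightarrow> ('x \<Rightarrow> 'a \<Rightarrow> 's \<Rightarrow> real)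
     \<Rightarrow> ('i::finite \<Rightarrow> 'x \<Rightarrow> 'a \<Rightarrow> 's \<Rightarrow> real) \<Rightarrow> ('i \<Rightarrow> real)
     \<Rightarrow> (real^'i \<Rightarrow> 'x \<Rightarrow> 's \<Rightarrow> real) \<Rightarrow> bool" where
  "in_N se xe Jx Xset P \<beta> \<zeta> Aset p r g gbar F \<longleftrightarrow>
     in_M se xe Jx Xset F \<and>
     (\<forall>x\<in>Xset. \<forall>s.
        convex_on nonneg_orth (\<lambda>\<gamma>. F \<gamma> x s) \<and>
        (\<forall>\<gamma>1\<in>nonneg_orth. \<forall>\<gamma>2\<in>nonneg_orth.
           \<bar>F \<gamma>1 x s - F \<gamma>2 x s\<bar> \<le> Lconst Xset Aset \<beta> r g * (\<Sum>i\<in>UNIV. \<bar>\<gamma>1$i - \<gamma>2$i\<bar>)) \<and>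
        (\<forall>a. feasible P \<beta> \<zeta> Aset p g gbar x s a \<longrightarrow>
           (\<forall>\<gamma>\<in>nonneg_orth.
              contval P \<beta> \<zeta> x a r [s] + (\<Sum>i\<in>UNIV. \<gamma>$i * contval P \<beta> \<zeta> x a (g i) [s])
              \<le> F \<gamma> x s)) \<and>
        (\<forall>\<gamma>\<in>nonneg_orth. F \<gamma> x s \<le> (1 + (\<Sum>i\<in>UNIV. \<gamma>$i)) * Lconst Xset Aset \<beta> r g))"

end

theory Submission
  imports Defs
begin


lemma finite_len: "finite {e::'s::finite list. length e = n}"
  using finite_lists_length_eq[of "UNIV::'s set" n] by simp

lemma len_Suc_eq: "{e::'s list. length e = Suc n} = (\<lambda>(s',e'). s'#e') ` (UNIV \<times> {e. length e = n})"
  by (auto simp: length_Suc_conv image_iff)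

lemma cexp_0: "cexp P h 0 f = f h"
  by (simp add: cexp_def)

lemma cexp_Suc: "cexp P h (Suc n) f = (\<Sum>s'\<in>UNIV. P (last h) s' * cexp P (h @ [s']) n f)"
proof -
  have inj: "inj_on (\<lambda>(s'::'a,e'). s'#e') (UNIV \<times> {e. length e = n})"
    by (auto simp: inj_on_def)
  have "cexp P h (Suc n) f = (\<Sum>(s',e')\<in>UNIV \<times> {e. length e = n}. pathprob P (last h) (s'#e') * f (h @ s' # e'))"
    unfolding cexp_def len_Suc_eq by (subst sum.reindex[OF inj]) (simp add: case_prod_beta)
  also have "\<dots> = (\<Sum>s'\<in>UNIV. \<Sum>e'\<in>{e. length e = n}. P (last h) s' * (pathprob P s' e' * f ((h @ [s']) @ e')))"
    by (subst sum.cartesian_product[symmetric]) (simp add: mult.assoc)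
  also have "\<dots> = (\<Sum>s'\<in>UNIV. P (last h) s' * cexp P (h @ [s']) n f)"
    by (simp add: cexp_def sum_distrib_left)
  finally show ?thesis .
qed

lemma pathprob_nonneg: "(\<And>s s'. 0 \<le> P s s') \<Longrightarrow> 0 \<le> pathprob P s e"
  by (induction e arbitrary: s) auto

lemma cexp_one: "(\<And>s. (\<Sum>s'\<in>UNIV. P s s') = 1) \<Longrightarrow> cexp P h n (\<lambda>_. 1) = 1"
proof (induction n arbitrary: h)
  case 0 then show ?case by (simp add: cexp_0)
next
  case (Suc n) then show ?case by (simp add: cexp_Suc)
qed

lemma cexp_abs_le:
  fixes P :: "'s::finite \<Rightarrow> 's \<Rightarrow> real"
  assumes "\<And>s s'. 0 \<le> P s s'" "\<And>s. (\<Sum>s'\<in>UNIV. P s s') = 1"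
    and "\<And>e. \<bar>f (h @ e)\<bar> \<le> M"
  shows "\<bar>cexp P h n f\<bar> \<le> M"
proof -
  have "\<bar>cexp P h n f\<bar> \<le> (\<Sum>e\<in>{e. length e = n}. pathprob P (last h) e * M)"
    unfolding cexp_def
    by (rule order_trans[OF sum_abs sum_mono])
       (simp add: abs_mult pathprob_nonneg[OF assms(1)] mult_left_mono assms(3))
  also have "\<dots> = M * cexp P h n (\<lambda>_. 1)"
    by (simp add: cexp_def sum_distrib_left mult.commute)
  also have "\<dots> = M" using cexp_one[OF assms(2)] by simp
  finally show ?thesis .
qed

definition cv :: "('s::finite \<Rightarrow> 's \<Rightarrow> real) \<Rightarrow> real \<Rightarrow> 's list \<Rightarrow> ('s list \<Rightarrow> real) \<Rightarrow> real" where
  "cv P \<beta> h f = (\<Sum>n. \<beta>^n * cexp P h n f)"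

lemma contval_cv: "contval P \<beta> \<zeta> x0 a u h = cv P \<beta> h (\<lambda>h'. u (traj \<zeta> a x0 h') (a h') (last h'))"
  by (simp add: contval_def cv_def)

lemma cv_summable:
  fixes P :: "'s::finite \<Rightarrow> 's \<Rightarrow> real"
  assumes "\<And>s s'. 0 \<le> P s s'" "\<And>s. (\<Sum>s'\<in>UNIV. P s s') = 1"
    and "\<And>e. \<bar>f (h @ e)\<bar> \<le> M" and "0 \<le> \<beta>" "\<beta> < 1"
  shows "summable (\<lambda>n. \<beta>^n * cexp P h n f)"
proof (rule summable_comparison_test')
  show "summable (\<lambda>n. M * \<beta>^n)" using assms(4,5) by (intro summable_mult summable_geometric) simp
  fix n
  show "norm (\<beta>^n * cexp P h n f) \<le> M * \<beta>^n"
    using cexp_abs_le[where P=P and f=f and h=h and M=M and n=n, OF assms(1-3)] assms(4)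
    by (simp add: abs_mult) (metis mult.commute mult_left_mono zero_le_power)
qed

lemma cv_abs_le:
  fixes P :: "'s::finite \<Rightarrow> 's \<Rightarrow> real"
  assumes "\<And>s s'. 0 \<le> P s s'" "\<And>s. (\<Sum>s'\<in>UNIV. P s s') = 1"
    and "\<And>e. \<bar>f (h @ e)\<bar> \<le> M" and "0 \<le> \<beta>" "\<beta> < 1"
  shows "\<bar>cv P \<beta> h f\<bar> \<le> M / (1 - \<beta>)"
proof -
  have s1: "summable (\<lambda>n. \<beta>^n * cexp P h n f)" by (rule cv_summable[where P=P and f=f and h=h and M=M, OF assms])
  have s2: "summable (\<lambda>n. M * \<beta>^n)" using assms(4,5) by (intro summable_mult summable_geometric) simp
  have b: "\<bar>\<beta>^n * cexp P h n f\<bar> \<le> M * \<beta>^n" for n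
    using cexp_abs_le[where P=P and f=f and h=h and M=M and n=n, OF assms(1-3)] assms(4)
    by (simp add: abs_mult) (metis mult.commute mult_left_mono zero_le_power)
  have g: "(\<Sum>n. M * \<beta>^n) = M / (1 - \<beta>)"
    using assms(4,5) by (simp add: suminf_mult suminf_geometric)
  have "cv P \<beta> h f \<le> (\<Sum>n. M * \<beta>^n)"
    unfolding cv_def using b by (intro suminf_le[OF _ s1 s2]) (simp add: abs_le_iff)
  moreover have "(\<Sum>n. - (M * \<beta>^n)) \<le> cv P \<beta> h f"
    unfolding cv_def using b s2 by (intro suminf_le[OF _ _ s1]) (auto simp: abs_le_iff summable_minus, smt (verit))
  moreover have "(\<Sum>n. - (M * \<beta>^n)) = - (\<Sum>n. M * \<beta>^n)" using s2 by (rule suminf_minus)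
  ultimately show ?thesis using g by auto
qed

lemma cv_rec:
  fixes P :: "'s::finite \<Rightarrow> 's \<Rightarrow> real"
  assumes "\<And>s s'. 0 \<le> P s s'" "\<And>s. (\<Sum>s'\<in>UNIV. P s s') = 1"
    and "\<And>e. \<bar>f (h @ e)\<bar> \<le> M" and "0 \<le> \<beta>" "\<beta> < 1"
  shows "cv P \<beta> h f = f h + \<beta> * (\<Sum>s'\<in>UNIV. P (last h) s' * cv P \<beta> (h @ [s']) f)"
proof -
  have s1: "summable (\<lambda>n. \<beta>^n * cexp P h n f)" by (rule cv_summable[where P=P and f=f and h=h and M=M, OF assms])
  have s2: "summable (\<lambda>n. \<beta>^n * cexp P (h @ [s']) n f)" for s'
    by (rule cv_summable[where P=P and f=f and h="h@[s']" and M=M, OF assms(1,2) _ assms(4,5)]) (use assms(3) in simp)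
  have "cv P \<beta> h f = \<beta>^0 * cexp P h 0 f + (\<Sum>n. \<beta>^(Suc n) * cexp P h (Suc n) f)"
    unfolding cv_def using suminf_split_head[OF s1] by simp
  also have "(\<Sum>n. \<beta>^(Suc n) * cexp P h (Suc n) f)
      = (\<Sum>n. \<Sum>s'\<in>UNIV. \<beta> * (P (last h) s' * (\<beta>^n * cexp P (h @ [s']) n f)))"
    by (simp add: cexp_Suc sum_distrib_left mult_ac)
  also have "\<dots> = (\<Sum>s'\<in>UNIV. \<Sum>n. \<beta> * (P (last h) s' * (\<beta>^n * cexp P (h @ [s']) n f)))"
    by (rule suminf_sum) (intro summable_mult s2)
  also have "\<dots> = (\<Sum>s'\<in>UNIV. \<beta> * (P (last h) s' * cv P \<beta> (h @ [s']) f))"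
    unfolding cv_def by (simp add: suminf_mult s2 summable_mult)
  finally show ?thesis by (simp add: cexp_0 sum_distrib_left)
qed

lemma trajr_shift:
  "l \<noteq> [] \<Longrightarrow> trajr \<zeta> (\<lambda>h. a (s#h)) (\<zeta> x0 (a [s]) s) l = trajr \<zeta> a x0 (l @ [s])"
proof (induction l rule: induct_list012)
  case (3 x y zs)
  then show ?case by simp
qed auto

lemma traj_shift:
  "h \<noteq> [] \<Longrightarrow> traj \<zeta> (\<lambda>h. a (s#h)) (\<zeta> x0 (a [s]) s) h = traj \<zeta> a x0 (s#h)"
  unfolding traj_def by (simp add: trajr_shift)

lemma contval_shift:
  assumes "h \<noteq> []"
  shows "contval P \<beta> \<zeta> (\<zeta> x0 (a [s]) s) (\<lambda>h. a (s#h)) u h = contval P \<beta> \<zeta> x0 a u (s#h)"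
proof -
  have "cexp P h n (\<lambda>h'. u (traj \<zeta> (\<lambda>h. a (s#h)) (\<zeta> x0 (a [s]) s) h') (a (s#h')) (last h'))
      = cexp P (s#h) n (\<lambda>h'. u (traj \<zeta> a x0 h') (a h') (last h'))" for n
    unfolding cexp_def using assms by (intro sum.cong) (auto simp: traj_shift)
  then show ?thesis unfolding contval_def by simp
qed

lemma trajr_in:
  assumes zX: "\<And>x a s. x \<in> X \<Longrightarrow> a \<in> A \<Longrightarrow> \<zeta> x a s \<in> X"
    and adm: "\<And>h. h \<noteq> [] \<Longrightarrow> hd h = s0 \<Longrightarrow> a h \<in> A" and x0: "x0 \<in> X"
  shows "l \<noteq> [] \<Longrightarrow> last l = s0 \<Longrightarrow> trajr \<zeta> a x0 l \<in> X"
proof (induction l rule: induct_list012)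
  case (3 x y zs)
  have "a (rev (y # zs)) \<in> A" using 3 by (intro adm) (auto simp: hd_rev)
  with 3 show ?case by (auto intro: zX)
qed (use x0 in auto)

lemma traj_in:
  assumes zX: "\<And>x a s. x \<in> X \<Longrightarrow> a \<in> A \<Longrightarrow> \<zeta> x a s \<in> X"
    and adm: "\<And>h. h \<noteq> [] \<Longrightarrow> hd h = s0 \<Longrightarrow> a h \<in> A" and x0: "x0 \<in> X"
    and "h \<noteq> []" "hd h = s0"
  shows "traj \<zeta> a x0 h \<in> X"
  unfolding traj_def using trajr_in[OF zX adm x0, where l="rev h"] assms(4,5) by (simp add: last_rev)

locale mdp =
  fixes P :: "'s::finite \<Rightarrow> 's \<Rightarrow> real" and \<beta> :: real and \<zeta> :: "'x \<Rightarrow> 'a \<Rightarrow> 's \<Rightarrow> 'x"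
    and Aset :: "'a set" and Xset :: "'x set" and p r :: "'x \<Rightarrow> 'a \<Rightarrow> 's \<Rightarrow> real"
    and g :: "'i::finite \<Rightarrow> 'x \<Rightarrow> 'a \<Rightarrow> 's \<Rightarrow> real" and gbar :: "'i \<Rightarrow> real"
  assumes P_pos: "\<And>s s'. 0 < P s s'"
    and P_sum: "\<And>s. (\<Sum>s'\<in>UNIV. P s s') = 1"
    and A_fin: "finite Aset"
    and \<zeta>_X: "\<And>x a s. x \<in> Xset \<Longrightarrow> a \<in> Aset \<Longrightarrow> \<zeta> x a s \<in> Xset"
    and r_bdd: "bounded ((\<lambda>(x,a,s). r x a s) ` (Xset \<times> Aset \<times> UNIV))"
    and g_bdd: "\<And>i. bounded ((\<lambda>(x,a,s). g i x a s) ` (Xset \<times> Aset \<times> UNIV))"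
    and \<beta>_pos: "0 < \<beta>" and \<beta>_lt: "\<beta> < 1"
    and feas_ex: "\<And>x0 s0. x0 \<in> Xset \<Longrightarrow> \<exists>a. feasible P \<beta> \<zeta> Aset p g gbar x0 s0 a"
begin

lemma P_nonneg: "0 \<le> P s s'" using P_pos[of s s'] by simp

definition Ub :: "('x \<Rightarrow> 'a \<Rightarrow> 's \<Rightarrow> real) \<Rightarrow> real" where
  "Ub u = (SUP (x,a,s)\<in>Xset \<times> Aset \<times> UNIV. \<bar>u x a s\<bar>)"

lemma Ub_le:
  assumes "bounded ((\<lambda>(x,a,s). u x a s) ` (Xset \<times> Aset \<times> UNIV))" "x \<in> Xset" "a \<in> Aset"
  shows "\<bar>u x a s\<bar> \<le> Ub u"
proof -
  obtain B where B: "\<And>y. y \<in> (\<lambda>(x,a,s). u x a s) ` (Xset \<times> Aset \<times> UNIV) \<Longrightarrow> norm y \<le> B"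
    using assms(1) unfolding bounded_iff by blast
  have bdd: "bdd_above ((\<lambda>(x,a,s). \<bar>u x a s\<bar>) ` (Xset \<times> Aset \<times> UNIV))"
  proof (rule bdd_aboveI[where M=B], clarsimp)
    fix x a s assume "x \<in> Xset" "a \<in> Aset"
    then show "\<bar>u x a s\<bar> \<le> B" using B[OF rev_image_eqI[of "(x,a,s)"]] by auto
  qed
  show ?thesis unfolding Ub_def
    using cSUP_upper[OF _ bdd, of "(x,a,s)"] assms(2,3) by simp
qed

lemma Ub_nonneg:
  assumes "bounded ((\<lambda>(x,a,s). u x a s) ` (Xset \<times> Aset \<times> UNIV))" "x \<in> Xset" "a \<in> Aset"
  shows "0 \<le> Ub u"
  using Ub_le[OF assms, of undefined] by linarith

lemma feasible_adm:
  assumes "feasible P \<beta> \<zeta> Aset p g gbar x0 s0 a" "h \<noteq> []" "hd h = s0"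
  shows "a h \<in> Aset" "0 \<le> p (traj \<zeta> a x0 h) (a h) (last h)"
  using assms unfolding feasible_def admissible_def by auto

lemma feasible_traj:
  assumes "feasible P \<beta> \<zeta> Aset p g gbar x0 s0 a" "x0 \<in> Xset" "h \<noteq> []" "hd h = s0"
  shows "traj \<zeta> a x0 h \<in> Xset"
  by (rule traj_in[OF \<zeta>_X _ assms(2) assms(3,4)]) (use feasible_adm(1)[OF assms(1)] in auto)

lemma feasible_bound:
  assumes "feasible P \<beta> \<zeta> Aset p g gbar x0 s0 a" "x0 \<in> Xset" "h \<noteq> []" "hd h = s0"
    and ub: "bounded ((\<lambda>(x,a,s). u x a s) ` (Xset \<times> Aset \<times> UNIV))"
  shows "\<bar>u (traj \<zeta> a x0 h) (a h) (last h)\<bar> \<le> Ub u"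
  by (rule Ub_le[OF ub feasible_traj[OF assms(1-4)] feasible_adm(1)[OF assms(1,3,4)]])

lemma contval_bound:
  assumes "feasible P \<beta> \<zeta> Aset p g gbar x0 s0 a" "x0 \<in> Xset" "h \<noteq> []" "hd h = s0"
    and ub: "bounded ((\<lambda>(x,a,s). u x a s) ` (Xset \<times> Aset \<times> UNIV))"
  shows "\<bar>contval P \<beta> \<zeta> x0 a u h\<bar> \<le> Ub u / (1 - \<beta>)"
  unfolding contval_cv
  by (rule cv_abs_le[where M="Ub u", OF P_nonneg P_sum _ less_imp_le[OF \<beta>_pos] \<beta>_lt])
     (use feasible_bound[OF assms(1,2) _ _ ub] assms(3,4) in auto)

lemma contval_rec1:
  assumes "feasible P \<beta> \<zeta> Aset p g gbar x0 s a" "x0 \<in> Xset"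
    and ub: "bounded ((\<lambda>(x,a,s). u x a s) ` (Xset \<times> Aset \<times> UNIV))"
  shows "contval P \<beta> \<zeta> x0 a u [s] = u x0 (a [s]) s
     + \<beta> * (\<Sum>s'\<in>UNIV. P s s' * contval P \<beta> \<zeta> (\<zeta> x0 (a [s]) s) (\<lambda>h. a (s#h)) u [s'])"
proof -
  have fb: "\<bar>u (traj \<zeta> a x0 ([s] @ e)) (a ([s] @ e)) (last ([s] @ e))\<bar> \<le> Ub u" for e
    by (rule feasible_bound[OF assms(1,2) _ _ ub]) auto
  have "contval P \<beta> \<zeta> x0 a u [s] = u (traj \<zeta> a x0 [s]) (a [s]) (last [s])
     + \<beta> * (\<Sum>s'\<in>UNIV. P (last [s]) s' * contval P \<beta> \<zeta> x0 a u ([s] @ [s']))"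
    unfolding contval_cv
    by (rule cv_rec[where M="Ub u", OF P_nonneg P_sum _ less_imp_le[OF \<beta>_pos] \<beta>_lt])
       (rule fb)
  also have "traj \<zeta> a x0 [s] = x0" by (simp add: traj_def)
  finally show ?thesis by (simp add: contval_shift[where h="[s']" for s', simplified])
qed

lemma feasible_shift:
  assumes "feasible P \<beta> \<zeta> Aset p g gbar x0 s a"
  shows "feasible P \<beta> \<zeta> Aset p g gbar (\<zeta> x0 (a [s]) s) s' (\<lambda>h. a (s#h))"
  unfolding feasible_def admissible_def
proof (intro conjI allI impI)
  fix h assume h: "h \<noteq> [] \<and> hd h = s'"
  show "a (s # h) \<in> Aset" by (rule feasible_adm(1)[OF assms]) auto
  show "0 \<le> p (traj \<zeta> (\<lambda>h. a (s # h)) (\<zeta> x0 (a [s]) s) h) (a (s # h)) (last h)"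
    using feasible_adm(2)[OF assms, of "s#h"] h by (simp add: traj_shift)
  fix i
  show "gbar i \<le> contval P \<beta> \<zeta> (\<zeta> x0 (a [s]) s) (\<lambda>h. a (s # h)) (g i) h"
    using assms h unfolding contval_shift[OF conjunct1[OF h]] feasible_def by auto
qed


definition L where "L = Lconst Xset Aset \<beta> r g"

lemma L_eq: "L = (Ub r + (\<Sum>i\<in>UNIV. Ub (g i))) / (1 - \<beta>)"
  by (simp add: L_def Lconst_def Ub_def)

definition Aset' :: "'x \<Rightarrow> 's \<Rightarrow> 'a set" where
  "Aset' x s = {a \<in> Aset. 0 \<le> p x a s}"

lemma Aset'_fin: "finite (Aset' x s)"
  using A_fin unfolding Aset'_def by simp

lemma feasible_first:
  assumes "feasible P \<beta> \<zeta> Aset p g gbar x s a"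
  shows "a [s] \<in> Aset' x s"
  using feasible_adm[OF assms, of "[s]"] unfolding Aset'_def by (simp add: traj_def)

lemma Aset'_ne: "x \<in> Xset \<Longrightarrow> Aset' x s \<noteq> {}"
  using feas_ex[of x s] feasible_first by blast

lemma XA_ne: "x \<in> Xset \<Longrightarrow> Aset \<noteq> {}"
  using Aset'_ne[of x undefined] unfolding Aset'_def by blast

lemma Ub_r_nonneg: "x \<in> Xset \<Longrightarrow> 0 \<le> Ub r"
  using XA_ne Ub_nonneg[OF r_bdd] by blast

lemma Ub_g_nonneg: "x \<in> Xset \<Longrightarrow> 0 \<le> Ub (g i)"
  using XA_ne Ub_nonneg[OF g_bdd] by blast

lemma L_nonneg: "x \<in> Xset \<Longrightarrow> 0 \<le> L"
  unfolding L_eq using \<beta>_lt Ub_r_nonneg Ub_g_nonneg by (auto intro!: divide_nonneg_pos sum_nonneg add_nonneg_nonneg)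

lemma Ub_r_le: "x \<in> Xset \<Longrightarrow> Ub r \<le> (1 - \<beta>) * L"
  unfolding L_eq using \<beta>_lt Ub_g_nonneg by (auto intro!: sum_nonneg)

lemma Ub_g_le: "x \<in> Xset \<Longrightarrow> Ub (g i) \<le> (1 - \<beta>) * L"
proof -
  assume x: "x \<in> Xset"
  have "Ub (g i) \<le> (\<Sum>j\<in>UNIV. Ub (g j))"
    by (rule member_le_sum) (use Ub_g_nonneg[OF x] in auto)
  then show ?thesis unfolding L_eq using \<beta>_lt Ub_r_nonneg[OF x] by auto
qed

lemma orth_0: "0 \<in> nonneg_orth" by (simp add: nonneg_orth_def)
lemma orth_add: "a \<in> nonneg_orth \<Longrightarrow> b \<in> nonneg_orth \<Longrightarrow> a + b \<in> nonneg_orth"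
  by (simp add: nonneg_orth_def)
lemma orth_ne: "nonneg_orth \<noteq> {}" using orth_0 by auto
lemma orth_convex: "convex (nonneg_orth :: (real^'n) set)"
  unfolding nonneg_orth_def convex_def by auto
lemma orth_comb: "a \<in> nonneg_orth \<Longrightarrow> b \<in> nonneg_orth \<Longrightarrow> 0 \<le> u \<Longrightarrow> 0 \<le> v \<Longrightarrow> u *\<^sub>R a + v *\<^sub>R b \<in> nonneg_orth"
  by (simp add: nonneg_orth_def)

definition trm :: "(real^'i \<Rightarrow> 'x \<Rightarrow> 's \<Rightarrow> real) \<Rightarrow> real^'i \<Rightarrow> 'x \<Rightarrow> 's \<Rightarrow> real^'i \<Rightarrow> 'a \<Rightarrow> real" where
  "trm F \<gamma> x s lam a = r x a s
                  + (\<Sum>i\<in>UNIV. \<gamma>$i * g i x a s + lam$i * (g i x a s - gbar i))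
                  + \<beta> * (\<Sum>s'\<in>UNIV. P s s' * F (\<gamma> + lam) (\<zeta> x a s) s')"

definition Phi :: "(real^'i \<Rightarrow> 'x \<Rightarrow> 's \<Rightarrow> real) \<Rightarrow> real^'i \<Rightarrow> 'x \<Rightarrow> 's \<Rightarrow> real^'i \<Rightarrow> real" where
  "Phi F \<gamma> x s lam = Sup (trm F \<gamma> x s lam ` Aset' x s)"

abbreviation B where "B \<equiv> bellman P \<beta> \<zeta> Aset p r g gbar"

lemma B_eq: "B F \<gamma> x s = (INF lam\<in>nonneg_orth. Phi F \<gamma> x s lam)"
  unfolding bellman_def Phi_def trm_def Aset'_def ..

lemma Phi_ge: "a \<in> Aset' x s \<Longrightarrow> trm F \<gamma> x s lam a \<le> Phi F \<gamma> x s lam"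
  unfolding Phi_def by (rule cSup_upper) (auto intro!: bdd_above_finite finite_imageI Aset'_fin)

lemma Phi_le: "x \<in> Xset \<Longrightarrow> (\<And>a. a \<in> Aset' x s \<Longrightarrow> trm F \<gamma> x s lam a \<le> c) \<Longrightarrow> Phi F \<gamma> x s lam \<le> c"
  unfolding Phi_def by (rule cSup_least) (use Aset'_ne in auto)

definition LBp :: "(real^'i \<Rightarrow> 'x \<Rightarrow> 's \<Rightarrow> real) \<Rightarrow> bool" where
  "LBp F \<longleftrightarrow> (\<forall>x\<in>Xset. \<forall>s. \<forall>a. feasible P \<beta> \<zeta> Aset p g gbar x s a \<longrightarrow>
           (\<forall>\<gamma>\<in>nonneg_orth.
              contval P \<beta> \<zeta> x a r [s] + (\<Sum>i\<in>UNIV. \<gamma>$i * contval P \<beta> \<zeta> x a (g i) [s])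
              \<le> F \<gamma> x s))"

definition UBp :: "(real^'i \<Rightarrow> 'x \<Rightarrow> 's \<Rightarrow> real) \<Rightarrow> bool" where
  "UBp F \<longleftrightarrow> (\<forall>x\<in>Xset. \<forall>s. \<forall>\<gamma>\<in>nonneg_orth. F \<gamma> x s \<le> (1 + (\<Sum>i\<in>UNIV. \<gamma>$i)) * Lconst Xset Aset \<beta> r g)"

definition LIPp :: "(real^'i \<Rightarrow> 'x \<Rightarrow> 's \<Rightarrow> real) \<Rightarrow> bool" where
  "LIPp F \<longleftrightarrow> (\<forall>x\<in>Xset. \<forall>s. \<forall>\<gamma>1\<in>nonneg_orth. \<forall>\<gamma>2\<in>nonneg_orth.
           \<bar>F \<gamma>1 x s - F \<gamma>2 x s\<bar> \<le> Lconst Xset Aset \<beta> r g * (\<Sum>i\<in>UNIV. \<bar>\<gamma>1$i - \<gamma>2$i\<bar>))"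

definition CVXp :: "(real^'i \<Rightarrow> 'x \<Rightarrow> 's \<Rightarrow> real) \<Rightarrow> bool" where
  "CVXp F \<longleftrightarrow> (\<forall>x\<in>Xset. \<forall>s. convex_on nonneg_orth (\<lambda>\<gamma>. F \<gamma> x s))"

lemma in_N_iff: "in_N se xe Jx Xset P \<beta> \<zeta> Aset p r g gbar F \<longleftrightarrow>
   in_M se xe Jx Xset F \<and> CVXp F \<and> LIPp F \<and> LBp F \<and> UBp F"
  unfolding in_N_def CVXp_def LIPp_def LBp_def UBp_def by blast

lemma Phi_lb:
  assumes LB: "LBp F" and x: "x \<in> Xset" and ga: "\<gamma> \<in> nonneg_orth" and la: "lam \<in> nonneg_orth"
    and fa: "feasible P \<beta> \<zeta> Aset p g gbar x s a"
  shows "contval P \<beta> \<zeta> x a r [s] + (\<Sum>i\<in>UNIV. \<gamma>$i * contval P \<beta> \<zeta> x a (g i) [s]) \<le> Phi F \<gamma> x s lam"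
proof -
  define a0 where "a0 = a [s]"
  define x' where "x' = \<zeta> x a0 s"
  define a' where "a' = (\<lambda>h. a (s#h))"
  define V0 where "V0 = contval P \<beta> \<zeta> x a r [s]"
  define V where "V i = contval P \<beta> \<zeta> x a (g i) [s]" for i
  define W0 where "W0 s' = contval P \<beta> \<zeta> x' a' r [s']" for s'
  define W where "W i s' = contval P \<beta> \<zeta> x' a' (g i) [s']" for i s'
  have a0: "a0 \<in> Aset' x s" unfolding a0_def by (rule feasible_first[OF fa])
  have fa': "feasible P \<beta> \<zeta> Aset p g gbar x' s' a'" for s'
    unfolding x'_def a'_def a0_def by (rule feasible_shift[OF fa])
  have x'X: "x' \<in> Xset" unfolding x'_def using a0 x \<zeta>_X by (auto simp: Aset'_def)
  have recr: "V0 = r x a0 s + \<beta> * (\<Sum>s'\<in>UNIV. P s s' * W0 s')"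
    unfolding V0_def W0_def x'_def a'_def a0_def by (rule contval_rec1[OF fa x r_bdd])
  have recg: "V i = g i x a0 s + \<beta> * (\<Sum>s'\<in>UNIV. P s s' * W i s')" for i
    unfolding V_def W_def x'_def a'_def a0_def by (rule contval_rec1[OF fa x g_bdd])
  have gb: "gbar i \<le> V i" for i using fa unfolding feasible_def V_def by auto
  have FW: "W0 s' + (\<Sum>i\<in>UNIV. (\<gamma> + lam)$i * W i s') \<le> F (\<gamma> + lam) x' s'" for s'
    using LB x'X fa'[of s'] orth_add[OF ga la] unfolding LBp_def W0_def W_def by blast
  define SW0 where "SW0 = (\<Sum>s'\<in>UNIV. P s s' * W0 s')"
  define SW where "SW i = (\<Sum>s'\<in>UNIV. P s s' * W i s')" for i
  have "trm F \<gamma> x s lam a0 \<ge> r x a0 s + (\<Sum>i\<in>UNIV. \<gamma>$i * g i x a0 s + lam$i * (g i x a0 s - gbar i))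
      + \<beta> * (\<Sum>s'\<in>UNIV. P s s' * (W0 s' + (\<Sum>i\<in>UNIV. (\<gamma> + lam)$i * W i s')))"
    unfolding trm_def x'_def[symmetric] using \<beta>_pos
    using FW
    by (auto intro!: mult_left_mono sum_mono P_nonneg)
  also have "(\<Sum>s'\<in>UNIV. P s s' * (W0 s' + (\<Sum>i\<in>UNIV. (\<gamma> + lam)$i * W i s')))
     = SW0 + (\<Sum>i\<in>UNIV. (\<gamma>$i + lam$i) * SW i)"
  proof -
    have "(\<Sum>s'\<in>UNIV. P s s' * (W0 s' + (\<Sum>i\<in>UNIV. (\<gamma> + lam)$i * W i s')))
        = (\<Sum>s'\<in>UNIV. P s s' * W0 s' + (\<Sum>i\<in>UNIV. (\<gamma>$i + lam$i) * (P s s' * W i s')))"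
      by (rule sum.cong) (simp_all add: distrib_left sum_distrib_left mult_ac)
    also have "\<dots> = SW0 + (\<Sum>s'\<in>UNIV. \<Sum>i\<in>UNIV. (\<gamma>$i + lam$i) * (P s s' * W i s'))"
      unfolding SW0_def by (rule sum.distrib)
    also have "(\<Sum>s'\<in>UNIV. \<Sum>i\<in>UNIV. (\<gamma>$i + lam$i) * (P s s' * W i s'))
       = (\<Sum>i\<in>UNIV. \<Sum>s'\<in>UNIV. (\<gamma>$i + lam$i) * (P s s' * W i s'))"
      by (rule sum.swap)
    also have "\<dots> = (\<Sum>i\<in>UNIV. (\<gamma>$i + lam$i) * SW i)"
      unfolding SW_def by (simp add: sum_distrib_left)
    finally show ?thesis .
  qed
  finally have t1: "r x a0 s + (\<Sum>i\<in>UNIV. \<gamma>$i * g i x a0 s + lam$i * (g i x a0 s - gbar i))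
      + \<beta> * (SW0 + (\<Sum>i\<in>UNIV. (\<gamma>$i + lam$i) * SW i)) \<le> trm F \<gamma> x s lam a0" .
  have recg': "V i = g i x a0 s + \<beta> * SW i" for i unfolding SW_def by (rule recg)
  have recr': "V0 = r x a0 s + \<beta> * SW0" unfolding SW0_def by (rule recr)
  have "(\<Sum>i\<in>UNIV. \<gamma>$i * V i + lam$i * (V i - gbar i))
     = (\<Sum>i\<in>UNIV. (\<gamma>$i * g i x a0 s + lam$i * (g i x a0 s - gbar i)) + \<beta> * ((\<gamma>$i + lam$i) * SW i))"
    unfolding recg' by (rule sum.cong) (simp_all add: algebra_simps)
  also have "\<dots> = (\<Sum>i\<in>UNIV. \<gamma>$i * g i x a0 s + lam$i * (g i x a0 s - gbar i)) + \<beta> * (\<Sum>i\<in>UNIV. (\<gamma>$i + lam$i) * SW i)"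
    by (simp add: sum.distrib sum_distrib_left)
  finally have "V0 + (\<Sum>i\<in>UNIV. \<gamma>$i * V i + lam$i * (V i - gbar i)) \<le> trm F \<gamma> x s lam a0"
    using t1 unfolding recr' by (simp add: distrib_left)
  moreover have "(\<Sum>i\<in>UNIV. \<gamma>$i * V i) \<le> (\<Sum>i\<in>UNIV. \<gamma>$i * V i + lam$i * (V i - gbar i))"
    using la gb by (intro sum_mono) (auto simp: nonneg_orth_def)
  ultimately show ?thesis using Phi_ge[OF a0, of F \<gamma> lam] unfolding V0_def V_def by linarith
qed


end




lemma inf_comb:
  fixes f g :: "'b \<Rightarrow> real"
  assumes "A \<noteq> {}" "B \<noteq> {}" "bdd_below (f`A)" "bdd_below (g`B)" "0 \<le> u" "0 \<le> v" "u + v = 1"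
    and H: "\<And>a b. a \<in> A \<Longrightarrow> b \<in> B \<Longrightarrow> c \<le> u * f a + v * g b"
  shows "c \<le> u * (INF a\<in>A. f a) + v * (INF b\<in>B. g b)"
proof (cases "u = 0")
  case True
  then have "v = 1" using assms by simp
  obtain a where a: "a \<in> A" using assms(1) by blast
  have "c \<le> (INF b\<in>B. g b)" by (rule cINF_greatest[OF assms(2)]) (use H[OF a] True \<open>v = 1\<close> in simp)
  then show ?thesis using True \<open>v = 1\<close> by simp
next
  case False
  then have u: "0 < u" using assms by simp
  have 1: "c - u * (INF a\<in>A. f a) \<le> v * g b" if b: "b \<in> B" for b
  proof -
    have "(c - v * g b) / u \<le> (INF a\<in>A. f a)"
      by (rule cINF_greatest[OF assms(1)]) (use H[OF _ b] u in \<open>simp add: field_simps\<close>)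
    then show ?thesis using u by (simp add: field_simps)
  qed
  show ?thesis
  proof (cases "v = 0")
    case True
    obtain b where b: "b \<in> B" using assms(2) by blast
    show ?thesis using 1[OF b] True by simp
  next
    case False
    then have v: "0 < v" using assms by simp
    have "(c - u * (INF a\<in>A. f a)) / v \<le> (INF b\<in>B. g b)"
      by (rule cINF_greatest[OF assms(2)]) (use 1 v in \<open>simp add: field_simps\<close>)
    then show ?thesis using v by (simp add: field_simps)
  qed
qed

context mdp begin

lemma Phi_bdd:
  assumes "LBp F" "x \<in> Xset" "\<gamma> \<in> nonneg_orth"
  shows "bdd_below (Phi F \<gamma> x s ` nonneg_orth)"
proof -
  obtain a where fa: "feasible P \<beta> \<zeta> Aset p g gbar x s a" using feas_ex[OF assms(2)] by blast
  show ?thesis by (rule bdd_belowI2, rule Phi_lb[OF assms(1-3) _ fa])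
qed

lemma B_le_Phi:
  assumes "LBp F" "x \<in> Xset" "\<gamma> \<in> nonneg_orth" "lam \<in> nonneg_orth"
  shows "B F \<gamma> x s \<le> Phi F \<gamma> x s lam"
  unfolding B_eq by (rule cINF_lower[OF Phi_bdd[OF assms(1-3)] assms(4)])

lemma B_LB: "LBp F \<Longrightarrow> LBp (B F)"
  unfolding LBp_def[of "B F"] B_eq
  by (intro ballI allI impI cINF_greatest[OF orth_ne] Phi_lb) auto

lemma B_UB:
  assumes LB: "LBp F" and UB: "UBp F"
  shows "UBp (B F)"
  unfolding UBp_def L_def[symmetric]
proof (intro ballI allI)
  fix x s and \<gamma> :: "real^'i" assume x: "x \<in> Xset" and ga: "\<gamma> \<in> nonneg_orth"
  have g0: "0 \<le> \<gamma>$i" for i using ga by (simp add: nonneg_orth_def)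
  have "Phi F \<gamma> x s 0 \<le> (1 + (\<Sum>i\<in>UNIV. \<gamma>$i)) * L"
  proof (rule Phi_le[OF x])
    fix a assume a: "a \<in> Aset' x s"
    then have aA: "a \<in> Aset" by (simp add: Aset'_def)
    have zx: "\<zeta> x a s \<in> Xset" using \<zeta>_X[OF x aA] .
    have r1: "r x a s \<le> (1 - \<beta>) * L"
      using Ub_le[OF r_bdd x aA, of s] Ub_r_le[OF x] by linarith
    have g1: "(\<Sum>i\<in>UNIV. \<gamma>$i * g i x a s + (0::real^'i)$i * (g i x a s - gbar i))
        \<le> (\<Sum>i\<in>UNIV. \<gamma>$i * ((1 - \<beta>) * L))"
    proof (rule sum_mono)
      fix i
      have "g i x a s \<le> (1 - \<beta>) * L" using Ub_le[OF g_bdd x aA, of i s] Ub_g_le[OF x, of i] by linarith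
      then show "\<gamma>$i * g i x a s + (0::real^'i)$i * (g i x a s - gbar i) \<le> \<gamma>$i * ((1 - \<beta>) * L)"
        using g0[of i] by (simp add: mult_left_mono)
    qed
    have f1: "(\<Sum>s'\<in>UNIV. P s s' * F (\<gamma> + 0) (\<zeta> x a s) s') \<le> (\<Sum>s'\<in>UNIV. P s s' * ((1 + (\<Sum>i\<in>UNIV. \<gamma>$i)) * L))"
      using UB zx ga unfolding UBp_def L_def[symmetric]
      by (intro sum_mono mult_left_mono P_nonneg) auto
    have f2: "(\<Sum>s'\<in>UNIV. P s s' * ((1 + (\<Sum>i\<in>UNIV. \<gamma>$i)) * L)) = (1 + (\<Sum>i\<in>UNIV. \<gamma>$i)) * L"
      by (simp add: sum_distrib_right[symmetric] P_sum)
    have "trm F \<gamma> x s 0 a \<le> (1 - \<beta>) * L + (\<Sum>i\<in>UNIV. \<gamma>$i * ((1 - \<beta>) * L)) + \<beta> * ((1 + (\<Sum>i\<in>UNIV. \<gamma>$i)) * L)"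
      unfolding trm_def using r1 g1 mult_left_mono[OF f1[unfolded f2] less_imp_le[OF \<beta>_pos]] by linarith
    also have "\<dots> = (1 + (\<Sum>i\<in>UNIV. \<gamma>$i)) * L"
      by (simp only: sum_distrib_right[symmetric]) (simp add: algebra_simps)
    finally show "trm F \<gamma> x s 0 a \<le> (1 + (\<Sum>i\<in>UNIV. \<gamma>$i)) * L" .
  qed
  then show "B F \<gamma> x s \<le> (1 + (\<Sum>i\<in>UNIV. \<gamma>$i)) * L"
    using B_le_Phi[OF LB x ga orth_0, of s] by linarith
qed


lemma B_mono:
  assumes LB: "LBp F" and le: "\<And>x s \<gamma>. x \<in> Xset \<Longrightarrow> \<gamma> \<in> nonneg_orth \<Longrightarrow> F \<gamma> x s \<le> G \<gamma> x s"
    and x: "x \<in> Xset" and ga: "\<gamma> \<in> nonneg_orth"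
  shows "B F \<gamma> x s \<le> B G \<gamma> x s"
  unfolding B_eq
proof (rule cINF_mono[OF orth_ne Phi_bdd[OF LB x ga]])
  fix lam :: "real^'i" assume la: "lam \<in> nonneg_orth"
  have "Phi F \<gamma> x s lam \<le> Phi G \<gamma> x s lam"
  proof (rule Phi_le[OF x])
    fix a assume a: "a \<in> Aset' x s"
    then have aA: "a \<in> Aset" by (simp add: Aset'_def)
    have "trm F \<gamma> x s lam a \<le> trm G \<gamma> x s lam a"
      unfolding trm_def using \<beta>_pos \<zeta>_X[OF x aA] orth_add[OF ga la]
      by (auto intro!: mult_left_mono sum_mono P_nonneg le)
    also have "\<dots> \<le> Phi G \<gamma> x s lam" by (rule Phi_ge[OF a])
    finally show "trm F \<gamma> x s lam a \<le> Phi G \<gamma> x s lam" .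
  qed
  then show "\<exists>n\<in>nonneg_orth. Phi F \<gamma> x s n \<le> Phi G \<gamma> x s lam" using la by blast
qed

lemma B_LIP1:
  assumes LB: "LBp F" and LIP: "LIPp F" and x: "x \<in> Xset"
    and g1: "\<gamma>1 \<in> nonneg_orth" and g2: "\<gamma>2 \<in> nonneg_orth"
  shows "B F \<gamma>1 x s \<le> B F \<gamma>2 x s + L * (\<Sum>i\<in>UNIV. \<bar>\<gamma>1$i - \<gamma>2$i\<bar>)"
proof -
  define d where "d = (\<Sum>i\<in>UNIV. \<bar>\<gamma>1$i - \<gamma>2$i\<bar>)"
  have Lnn: "0 \<le> L" using L_nonneg[OF x] .
  have key: "Phi F \<gamma>1 x s lam \<le> Phi F \<gamma>2 x s lam + L * d" if la: "lam \<in> nonneg_orth" for lam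
  proof (rule Phi_le[OF x])
    fix a assume a: "a \<in> Aset' x s"
    then have aA: "a \<in> Aset" by (simp add: Aset'_def)
    have zx: "\<zeta> x a s \<in> Xset" using \<zeta>_X[OF x aA] .
    have e1: "(\<Sum>i\<in>UNIV. \<gamma>1$i * g i x a s + lam$i * (g i x a s - gbar i))
       - (\<Sum>i\<in>UNIV. \<gamma>2$i * g i x a s + lam$i * (g i x a s - gbar i))
       = (\<Sum>i\<in>UNIV. (\<gamma>1$i - \<gamma>2$i) * g i x a s)"
      by (simp add: sum_subtractf[symmetric] algebra_simps)
    have b1: "(\<Sum>i\<in>UNIV. (\<gamma>1$i - \<gamma>2$i) * g i x a s) \<le> (\<Sum>i\<in>UNIV. \<bar>\<gamma>1$i - \<gamma>2$i\<bar> * ((1 - \<beta>) * L))"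
    proof (rule sum_mono)
      fix i
      have "\<bar>g i x a s\<bar> \<le> (1 - \<beta>) * L" using Ub_le[OF g_bdd x aA, of i s] Ub_g_le[OF x, of i] by linarith
      then have "\<bar>\<gamma>1$i - \<gamma>2$i\<bar> * \<bar>g i x a s\<bar> \<le> \<bar>\<gamma>1$i - \<gamma>2$i\<bar> * ((1 - \<beta>) * L)"
        by (simp add: mult_left_mono)
      moreover have "(\<gamma>1$i - \<gamma>2$i) * g i x a s \<le> \<bar>\<gamma>1$i - \<gamma>2$i\<bar> * \<bar>g i x a s\<bar>"
        by (metis abs_ge_self abs_mult)
      ultimately show "(\<gamma>1$i - \<gamma>2$i) * g i x a s \<le> \<bar>\<gamma>1$i - \<gamma>2$i\<bar> * ((1 - \<beta>) * L)" by linarith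
    qed
    have b1': "(\<Sum>i\<in>UNIV. \<bar>\<gamma>1$i - \<gamma>2$i\<bar> * ((1 - \<beta>) * L)) = (1 - \<beta>) * L * d"
      unfolding d_def sum_distrib_left by (simp add: mult_ac)
    have e2: "(\<Sum>s'\<in>UNIV. P s s' * F (\<gamma>1 + lam) (\<zeta> x a s) s') - (\<Sum>s'\<in>UNIV. P s s' * F (\<gamma>2 + lam) (\<zeta> x a s) s')
       = (\<Sum>s'\<in>UNIV. P s s' * (F (\<gamma>1 + lam) (\<zeta> x a s) s' - F (\<gamma>2 + lam) (\<zeta> x a s) s'))"
      by (simp add: sum_subtractf[symmetric] right_diff_distrib)
    have b2: "(\<Sum>s'\<in>UNIV. P s s' * (F (\<gamma>1 + lam) (\<zeta> x a s) s' - F (\<gamma>2 + lam) (\<zeta> x a s) s'))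
       \<le> (\<Sum>s'\<in>UNIV. P s s' * (L * d))"
    proof (intro sum_mono mult_left_mono P_nonneg)
      fix s'
      have "\<bar>F (\<gamma>1 + lam) (\<zeta> x a s) s' - F (\<gamma>2 + lam) (\<zeta> x a s) s'\<bar>
         \<le> L * (\<Sum>i\<in>UNIV. \<bar>(\<gamma>1 + lam)$i - (\<gamma>2 + lam)$i\<bar>)"
        using LIP zx orth_add[OF g1 la] orth_add[OF g2 la] unfolding LIPp_def L_def by blast
      then show "F (\<gamma>1 + lam) (\<zeta> x a s) s' - F (\<gamma>2 + lam) (\<zeta> x a s) s' \<le> L * d"
        unfolding d_def by simp
    qed
    have b2': "(\<Sum>s'\<in>UNIV. P s s' * (L * d)) = L * d"
      by (simp add: sum_distrib_right[symmetric] P_sum)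
    have bb: "\<beta> * (\<Sum>s'\<in>UNIV. P s s' * F (\<gamma>1 + lam) (\<zeta> x a s) s') - \<beta> * (\<Sum>s'\<in>UNIV. P s s' * F (\<gamma>2 + lam) (\<zeta> x a s) s') \<le> \<beta> * (L * d)"
      using mult_left_mono[OF b2[unfolded b2' e2[symmetric]] less_imp_le[OF \<beta>_pos]] by (simp add: right_diff_distrib)
    have "trm F \<gamma>1 x s lam a \<le> trm F \<gamma>2 x s lam a + (1 - \<beta>) * L * d + \<beta> * (L * d)"
      unfolding trm_def using e1 b1 b1' e2 b2 b2' bb by linarith
    also have "\<dots> = trm F \<gamma>2 x s lam a + L * d" by (simp add: algebra_simps)
    also have "\<dots> \<le> Phi F \<gamma>2 x s lam + L * d" using Phi_ge[OF a] by simp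
    finally show "trm F \<gamma>1 x s lam a \<le> Phi F \<gamma>2 x s lam + L * d" .
  qed
  have "B F \<gamma>1 x s - L * d \<le> B F \<gamma>2 x s"
    unfolding B_eq[of F \<gamma>2]
  proof (rule cINF_greatest[OF orth_ne])
    fix lam :: "real^'i" assume la: "lam \<in> nonneg_orth"
    show "B F \<gamma>1 x s - L * d \<le> Phi F \<gamma>2 x s lam"
      using B_le_Phi[OF LB x g1 la, of s] key[OF la] by linarith
  qed
  then show ?thesis unfolding d_def by linarith
qed

lemma B_LIP:
  assumes LB: "LBp F" and LIP: "LIPp F"
  shows "LIPp (B F)"
  unfolding LIPp_def L_def[symmetric]
proof (intro ballI allI)
  fix x s and \<gamma>1 \<gamma>2 :: "real^'i"
  assume x: "x \<in> Xset" and g1: "\<gamma>1 \<in> nonneg_orth" and g2: "\<gamma>2 \<in> nonneg_orth"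
  have "(\<Sum>i\<in>UNIV. \<bar>\<gamma>2$i - \<gamma>1$i\<bar>) = (\<Sum>i\<in>UNIV. \<bar>\<gamma>1$i - \<gamma>2$i\<bar>)"
    by (simp add: abs_minus_commute)
  then show "\<bar>B F \<gamma>1 x s - B F \<gamma>2 x s\<bar> \<le> L * (\<Sum>i\<in>UNIV. \<bar>\<gamma>1$i - \<gamma>2$i\<bar>)"
    using B_LIP1[OF LB LIP x g1 g2, of s] B_LIP1[OF LB LIP x g2 g1, of s, unfolded \<open>(\<Sum>i\<in>UNIV. \<bar>\<gamma>2$i - \<gamma>1$i\<bar>) = _\<close>] by (intro abs_leI) linarith+
qed

lemma B_CVX:
  assumes LB: "LBp F" and CVX: "CVXp F"
  shows "CVXp (B F)"
  unfolding CVXp_def convex_on_def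
proof (intro ballI allI impI conjI orth_convex)
  fix x s and \<gamma>1 \<gamma>2 :: "real^'i" and u v :: real
  assume x: "x \<in> Xset" and g1: "\<gamma>1 \<in> nonneg_orth" and g2: "\<gamma>2 \<in> nonneg_orth"
    and u: "0 \<le> u" and v: "0 \<le> v" and uv: "u + v = 1"
  have gm: "u *\<^sub>R \<gamma>1 + v *\<^sub>R \<gamma>2 \<in> nonneg_orth" by (rule orth_comb[OF g1 g2 u v])
  have key: "B F (u *\<^sub>R \<gamma>1 + v *\<^sub>R \<gamma>2) x s \<le> u * Phi F \<gamma>1 x s l1 + v * Phi F \<gamma>2 x s l2"
    if l1: "l1 \<in> nonneg_orth" and l2: "l2 \<in> nonneg_orth" for l1 l2
  proof -
    have lm: "u *\<^sub>R l1 + v *\<^sub>R l2 \<in> nonneg_orth" by (rule orth_comb[OF l1 l2 u v])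
    have "Phi F (u *\<^sub>R \<gamma>1 + v *\<^sub>R \<gamma>2) x s (u *\<^sub>R l1 + v *\<^sub>R l2) \<le> u * Phi F \<gamma>1 x s l1 + v * Phi F \<gamma>2 x s l2"
    proof (rule Phi_le[OF x])
      fix a assume a: "a \<in> Aset' x s"
      then have aA: "a \<in> Aset" by (simp add: Aset'_def)
      have zx: "\<zeta> x a s \<in> Xset" using \<zeta>_X[OF x aA] .
      have vec: "(u *\<^sub>R \<gamma>1 + v *\<^sub>R \<gamma>2) + (u *\<^sub>R l1 + v *\<^sub>R l2) = u *\<^sub>R (\<gamma>1 + l1) + v *\<^sub>R (\<gamma>2 + l2)"
        by (simp add: algebra_simps)
      have cf: "F (u *\<^sub>R (\<gamma>1 + l1) + v *\<^sub>R (\<gamma>2 + l2)) (\<zeta> x a s) s'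
          \<le> u * F (\<gamma>1 + l1) (\<zeta> x a s) s' + v * F (\<gamma>2 + l2) (\<zeta> x a s) s'" for s'
        using CVX zx orth_add[OF g1 l1] orth_add[OF g2 l2] u v uv unfolding CVXp_def convex_on_def by blast
      have C: "(\<Sum>s'\<in>UNIV. P s s' * F ((u *\<^sub>R \<gamma>1 + v *\<^sub>R \<gamma>2) + (u *\<^sub>R l1 + v *\<^sub>R l2)) (\<zeta> x a s) s')
          \<le> u * (\<Sum>s'\<in>UNIV. P s s' * F (\<gamma>1 + l1) (\<zeta> x a s) s') + v * (\<Sum>s'\<in>UNIV. P s s' * F (\<gamma>2 + l2) (\<zeta> x a s) s')"
      proof -
        have "(\<Sum>s'\<in>UNIV. P s s' * F ((u *\<^sub>R \<gamma>1 + v *\<^sub>R \<gamma>2) + (u *\<^sub>R l1 + v *\<^sub>R l2)) (\<zeta> x a s) s')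
          \<le> (\<Sum>s'\<in>UNIV. P s s' * (u * F (\<gamma>1 + l1) (\<zeta> x a s) s' + v * F (\<gamma>2 + l2) (\<zeta> x a s) s'))"
          unfolding vec by (intro sum_mono mult_left_mono P_nonneg cf)
        also have "\<dots> = u * (\<Sum>s'\<in>UNIV. P s s' * F (\<gamma>1 + l1) (\<zeta> x a s) s') + v * (\<Sum>s'\<in>UNIV. P s s' * F (\<gamma>2 + l2) (\<zeta> x a s) s')"
          by (simp add: sum_distrib_left sum.distrib algebra_simps)
        finally show ?thesis .
      qed
      have A: "(\<Sum>i\<in>UNIV. (u *\<^sub>R \<gamma>1 + v *\<^sub>R \<gamma>2)$i * g i x a s + (u *\<^sub>R l1 + v *\<^sub>R l2)$i * (g i x a s - gbar i))
         = u * (\<Sum>i\<in>UNIV. \<gamma>1$i * g i x a s + l1$i * (g i x a s - gbar i))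
           + v * (\<Sum>i\<in>UNIV. \<gamma>2$i * g i x a s + l2$i * (g i x a s - gbar i))"
        by (simp add: sum_distrib_left sum.distrib[symmetric] algebra_simps)
      have R: "r x a s = u * r x a s + v * r x a s" using uv by (metis distrib_right mult_1)
      have "trm F (u *\<^sub>R \<gamma>1 + v *\<^sub>R \<gamma>2) x s (u *\<^sub>R l1 + v *\<^sub>R l2) a \<le> u * trm F \<gamma>1 x s l1 a + v * trm F \<gamma>2 x s l2 a"
        unfolding trm_def A using mult_left_mono[OF C less_imp_le[OF \<beta>_pos]] R
        by (simp add: algebra_simps)
      also have "\<dots> \<le> u * Phi F \<gamma>1 x s l1 + v * Phi F \<gamma>2 x s l2"
        using Phi_ge[OF a] u v by (intro add_mono mult_left_mono) auto
      finally show "trm F (u *\<^sub>R \<gamma>1 + v *\<^sub>R \<gamma>2) x s (u *\<^sub>R l1 + v *\<^sub>R l2) a \<le> u * Phi F \<gamma>1 x s l1 + v * Phi F \<gamma>2 x s l2" .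
    qed
    then show ?thesis using B_le_Phi[OF LB x gm lm, of s] by linarith
  qed
  show "B F (u *\<^sub>R \<gamma>1 + v *\<^sub>R \<gamma>2) x s \<le> u * B F \<gamma>1 x s + v * B F \<gamma>2 x s"
    unfolding B_eq[of F \<gamma>1] B_eq[of F \<gamma>2]
    by (rule inf_comb[OF orth_ne orth_ne Phi_bdd[OF LB x g1] Phi_bdd[OF LB x g2] u v uv key])
qed

end



context mdp begin

definition F0 :: "real^'i \<Rightarrow> 'x \<Rightarrow> 's \<Rightarrow> real" where
  "F0 = (\<lambda>\<gamma> x s. (1 + (\<Sum>i\<in>UNIV. \<gamma>$i)) * Lconst Xset Aset \<beta> r g)"

definition good where "good F \<longleftrightarrow> CVXp F \<and> LIPp F \<and> LBp F \<and> UBp F"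

lemma good_B: "good F \<Longrightarrow> good (B F)"
  unfolding good_def using B_CVX B_LIP B_LB B_UB by blast

lemma F0_good: "good F0"
  unfolding good_def
proof (intro conjI)
  show "CVXp F0" unfolding CVXp_def convex_on_def F0_def L_def[symmetric]
  proof (intro ballI allI impI conjI orth_convex)
    fix x s and \<gamma>1 \<gamma>2 :: "real^'i" and u v :: real
    assume "u + v = 1"
    then show "(1 + (\<Sum>i\<in>UNIV. (u *\<^sub>R \<gamma>1 + v *\<^sub>R \<gamma>2)$i)) * L \<le> u * ((1 + (\<Sum>i\<in>UNIV. \<gamma>1$i)) * L) + v * ((1 + (\<Sum>i\<in>UNIV. \<gamma>2$i)) * L)"
      by (simp add: sum.distrib sum_distrib_left[symmetric] algebra_simps) (metis distrib_right mult_1 order_refl)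
  qed
  show "LIPp F0" unfolding LIPp_def F0_def L_def[symmetric]
  proof (intro ballI allI)
    fix x s and \<gamma>1 \<gamma>2 :: "real^'i" assume x: "x \<in> Xset"
    have "\<bar>(1 + (\<Sum>i\<in>UNIV. \<gamma>1$i)) * L - (1 + (\<Sum>i\<in>UNIV. \<gamma>2$i)) * L\<bar> = L * \<bar>\<Sum>i\<in>UNIV. \<gamma>1$i - \<gamma>2$i\<bar>"
      using L_nonneg[OF x] by (simp add: sum_subtractf abs_mult algebra_simps) (metis abs_mult abs_of_nonneg left_diff_distrib mult.commute)
    also have "\<dots> \<le> L * (\<Sum>i\<in>UNIV. \<bar>\<gamma>1$i - \<gamma>2$i\<bar>)"
      using L_nonneg[OF x] by (intro mult_left_mono sum_abs) auto
    finally show "\<bar>(1 + (\<Sum>i\<in>UNIV. \<gamma>1$i)) * L - (1 + (\<Sum>i\<in>UNIV. \<gamma>2$i)) * L\<bar> \<le> L * (\<Sum>i\<in>UNIV. \<bar>\<gamma>1$i - \<gamma>2$i\<bar>)" .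
  qed
  show "UBp F0" unfolding UBp_def F0_def by simp
  show "LBp F0" unfolding LBp_def F0_def L_def[symmetric]
  proof (intro ballI allI impI)
    fix x s a and \<gamma> :: "real^'i"
    assume x: "x \<in> Xset" and fa: "feasible P \<beta> \<zeta> Aset p g gbar x s a" and ga: "\<gamma> \<in> nonneg_orth"
    have b: "\<bar>contval P \<beta> \<zeta> x a u [s]\<bar> \<le> L" if ub: "bounded ((\<lambda>(x,a,s). u x a s) ` (Xset \<times> Aset \<times> UNIV))"
       and ul: "Ub u \<le> (1 - \<beta>) * L" for u
    proof -
      have "\<bar>contval P \<beta> \<zeta> x a u [s]\<bar> \<le> Ub u / (1 - \<beta>)" by (rule contval_bound[OF fa x _ _ ub]) auto
      also have "\<dots> \<le> L" using ul \<beta>_lt by (simp add: divide_le_eq mult.commute)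
      finally show ?thesis .
    qed
    have r: "contval P \<beta> \<zeta> x a r [s] \<le> L" using b[OF r_bdd Ub_r_le[OF x]] by linarith
    have gi: "(\<Sum>i\<in>UNIV. \<gamma>$i * contval P \<beta> \<zeta> x a (g i) [s]) \<le> (\<Sum>i\<in>UNIV. \<gamma>$i * L)"
    proof (rule sum_mono)
      fix i
      have "contval P \<beta> \<zeta> x a (g i) [s] \<le> L" using b[OF g_bdd Ub_g_le[OF x, of i]] by linarith
      then show "\<gamma>$i * contval P \<beta> \<zeta> x a (g i) [s] \<le> \<gamma>$i * L"
        using ga by (intro mult_left_mono) (auto simp: nonneg_orth_def)
    qed
    show "contval P \<beta> \<zeta> x a r [s] + (\<Sum>i\<in>UNIV. \<gamma>$i * contval P \<beta> \<zeta> x a (g i) [s]) \<le> (1 + (\<Sum>i\<in>UNIV. \<gamma>$i)) * L"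
      using r gi by (simp add: sum_distrib_right[symmetric] algebra_simps)
  qed
qed

definition Fn :: "nat \<Rightarrow> real^'i \<Rightarrow> 'x \<Rightarrow> 's \<Rightarrow> real" where
  "Fn n = (B ^^ n) F0"

lemma Fn_Suc: "Fn (Suc n) = B (Fn n)" by (simp add: Fn_def)

lemma Fn_good: "good (Fn n)"
  by (induction n) (auto simp: Fn_def F0_good good_B)

lemma goodD: assumes "good F" shows "CVXp F" "LIPp F" "LBp F" "UBp F"
  using assms unfolding good_def by auto

lemma Fn_dec: "x \<in> Xset \<Longrightarrow> \<gamma> \<in> nonneg_orth \<Longrightarrow> Fn (Suc n) \<gamma> x s \<le> Fn n \<gamma> x s"
proof (induction n arbitrary: x \<gamma> s)
  case 0
  then show ?case using goodD(4)[OF Fn_good[of 1]] unfolding UBp_def by (simp add: Fn_def F0_def)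
next
  case (Suc n)
  then show ?case unfolding Fn_Suc[of "Suc n"] Fn_Suc[of n]
    by (intro B_mono[OF goodD(3)[OF Fn_good[of "Suc n"], unfolded Fn_Suc]]) auto
qed

lemma Fn_decseq: "x \<in> Xset \<Longrightarrow> \<gamma> \<in> nonneg_orth \<Longrightarrow> decseq (\<lambda>n. Fn n \<gamma> x s)"
  by (rule decseq_SucI) (rule Fn_dec)

lemma Fn_lb:
  assumes "x \<in> Xset" "\<gamma> \<in> nonneg_orth"
  obtains c where "\<And>n. c \<le> Fn n \<gamma> x s"
proof -
  obtain a where fa: "feasible P \<beta> \<zeta> Aset p g gbar x s a" using feas_ex[OF assms(1)] by blast
  show ?thesis using goodD(3)[OF Fn_good] assms fa unfolding LBp_def by (intro that) blast
qed

definition Fs :: "real^'i \<Rightarrow> 'x \<Rightarrow> 's \<Rightarrow> real" where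
  "Fs \<gamma> x s = (INF n. Fn n \<gamma> x s)"

lemma Fn_bdd: "x \<in> Xset \<Longrightarrow> \<gamma> \<in> nonneg_orth \<Longrightarrow> bdd_below (range (\<lambda>n. Fn n \<gamma> x s))"
proof -
  assume "x \<in> Xset" "\<gamma> \<in> nonneg_orth"
  then obtain c where "\<And>n. c \<le> Fn n \<gamma> x s" using Fn_lb by blast
  then show ?thesis by (intro bdd_belowI2[where m=c])
qed

lemma Fn_lim: "x \<in> Xset \<Longrightarrow> \<gamma> \<in> nonneg_orth \<Longrightarrow> (\<lambda>n. Fn n \<gamma> x s) \<longlonglongrightarrow> Fs \<gamma> x s"
  unfolding Fs_def by (rule LIMSEQ_decseq_INF[OF Fn_bdd Fn_decseq])

lemma Fs_le: "x \<in> Xset \<Longrightarrow> \<gamma> \<in> nonneg_orth \<Longrightarrow> Fs \<gamma> x s \<le> Fn n \<gamma> x s"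
  unfolding Fs_def by (rule cINF_lower[OF Fn_bdd]) auto

lemma Fs_ge: "x \<in> Xset \<Longrightarrow> \<gamma> \<in> nonneg_orth \<Longrightarrow> (\<And>n. c \<le> Fn n \<gamma> x s) \<Longrightarrow> c \<le> Fs \<gamma> x s"
  unfolding Fs_def by (rule cINF_greatest) auto


lemma Fs_good: "good Fs"
  unfolding good_def
proof (intro conjI)
  show "LBp Fs" unfolding LBp_def
    using goodD(3)[OF Fn_good] unfolding LBp_def by (blast intro: Fs_ge)
  show "UBp Fs" unfolding UBp_def
    using Fs_le[of _ _ _ 0] by (auto simp: Fn_def F0_def)
  show "LIPp Fs" unfolding LIPp_def
  proof (intro ballI allI)
    fix x s and \<gamma>1 \<gamma>2 :: "real^'i" assume x: "x \<in> Xset" and g1: "\<gamma>1 \<in> nonneg_orth" and g2: "\<gamma>2 \<in> nonneg_orth"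
    have lim: "(\<lambda>n. \<bar>Fn n \<gamma>1 x s - Fn n \<gamma>2 x s\<bar>) \<longlonglongrightarrow> \<bar>Fs \<gamma>1 x s - Fs \<gamma>2 x s\<bar>"
      by (intro tendsto_rabs tendsto_diff Fn_lim x g1 g2)
    show "\<bar>Fs \<gamma>1 x s - Fs \<gamma>2 x s\<bar> \<le> Lconst Xset Aset \<beta> r g * (\<Sum>i\<in>UNIV. \<bar>\<gamma>1$i - \<gamma>2$i\<bar>)"
      by (rule LIMSEQ_le_const2[OF lim]) (use goodD(2)[OF Fn_good] x g1 g2 in \<open>auto simp: LIPp_def\<close>)
  qed
  show "CVXp Fs" unfolding CVXp_def convex_on_def
  proof (intro ballI allI impI conjI orth_convex)
    fix x s and \<gamma>1 \<gamma>2 :: "real^'i" and u v :: real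
    assume x: "x \<in> Xset" and g1: "\<gamma>1 \<in> nonneg_orth" and g2: "\<gamma>2 \<in> nonneg_orth"
      and u: "0 \<le> u" and v: "0 \<le> v" and uv: "u + v = 1"
    have gm: "u *\<^sub>R \<gamma>1 + v *\<^sub>R \<gamma>2 \<in> nonneg_orth" by (rule orth_comb[OF g1 g2 u v])
    have lim: "(\<lambda>n. u * Fn n \<gamma>1 x s + v * Fn n \<gamma>2 x s) \<longlonglongrightarrow> u * Fs \<gamma>1 x s + v * Fs \<gamma>2 x s"
      by (intro tendsto_add tendsto_mult_left Fn_lim x g1 g2)
    show "Fs (u *\<^sub>R \<gamma>1 + v *\<^sub>R \<gamma>2) x s \<le> u * Fs \<gamma>1 x s + v * Fs \<gamma>2 x s"
    proof (rule LIMSEQ_le_const[OF lim], intro exI allI impI)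
      fix n
      have "Fs (u *\<^sub>R \<gamma>1 + v *\<^sub>R \<gamma>2) x s \<le> Fn n (u *\<^sub>R \<gamma>1 + v *\<^sub>R \<gamma>2) x s" by (rule Fs_le[OF x gm])
      also have "\<dots> \<le> u * Fn n \<gamma>1 x s + v * Fn n \<gamma>2 x s"
        using goodD(1)[OF Fn_good[of n]] x g1 g2 u v uv unfolding CVXp_def convex_on_def by blast
      finally show "Fs (u *\<^sub>R \<gamma>1 + v *\<^sub>R \<gamma>2) x s \<le> u * Fn n \<gamma>1 x s + v * Fn n \<gamma>2 x s" .
    qed
  qed
qed

lemma Fs_fix:
  assumes x: "x \<in> Xset" and ga: "\<gamma> \<in> nonneg_orth"
  shows "B Fs \<gamma> x s = Fs \<gamma> x s"
proof (rule antisym)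
  have LBs: "LBp Fs" using goodD(3)[OF Fs_good] .
  have le: "B Fs \<gamma> x s \<le> Fn (Suc n) \<gamma> x s" for n
    unfolding Fn_Suc by (rule B_mono[OF LBs Fs_le x ga])
  show "B Fs \<gamma> x s \<le> Fs \<gamma> x s"
  proof (rule Fs_ge[OF x ga])
    fix n show "B Fs \<gamma> x s \<le> Fn n \<gamma> x s"
    proof (cases n)
      case 0 then show ?thesis using le[of 0] Fn_dec[OF x ga, of 0 s] by simp
    next
      case (Suc m) then show ?thesis using le[of m] by simp
    qed
  qed
  show "Fs \<gamma> x s \<le> B Fs \<gamma> x s"
    unfolding B_eq
  proof (rule cINF_greatest[OF orth_ne])
    fix lam :: "real^'i" assume la: "lam \<in> nonneg_orth"
    have lim: "(\<lambda>n. Phi (Fn n) \<gamma> x s lam) \<longlonglongrightarrow> Phi Fs \<gamma> x s lam"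
      unfolding Phi_def
    proof (intro tendsto_Sup Aset'_fin)
      fix a assume a: "a \<in> Aset' x s"
      then have aA: "a \<in> Aset" by (simp add: Aset'_def)
      show "(\<lambda>n. trm (Fn n) \<gamma> x s lam a) \<longlonglongrightarrow> trm Fs \<gamma> x s lam a"
        unfolding trm_def
        by (intro tendsto_intros Fn_lim \<zeta>_X[OF x aA] orth_add[OF ga la])
    qed
    show "Fs \<gamma> x s \<le> Phi Fs \<gamma> x s lam"
    proof (rule LIMSEQ_le_const[OF lim], intro exI allI impI)
      fix n
      have "Fs \<gamma> x s \<le> Fn (Suc n) \<gamma> x s" by (rule Fs_le[OF x ga])
      also have "\<dots> \<le> Phi (Fn n) \<gamma> x s lam"
        unfolding Fn_Suc by (rule B_le_Phi[OF goodD(3)[OF Fn_good] x ga la])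
      finally show "Fs \<gamma> x s \<le> Phi (Fn n) \<gamma> x s lam" .
    qed
  qed
qed

lemma Fs_max:
  assumes G: "good G" and fixG: "\<And>x \<gamma> s. x \<in> Xset \<Longrightarrow> \<gamma> \<in> nonneg_orth \<Longrightarrow> B G \<gamma> x s = G \<gamma> x s"
    and x: "x \<in> Xset" and ga: "\<gamma> \<in> nonneg_orth"
  shows "G \<gamma> x s \<le> Fs \<gamma> x s"
proof -
  have "G \<gamma> x s \<le> Fn n \<gamma> x s" if "x \<in> Xset" "\<gamma> \<in> nonneg_orth" for n x \<gamma> s
    using that
  proof (induction n arbitrary: x \<gamma> s)
    case 0 then show ?case using goodD(4)[OF G] by (simp add: UBp_def Fn_def F0_def)
  next
    case (Suc n)
    have "G \<gamma> x s = B G \<gamma> x s" using fixG Suc.prems by simp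
    also have "\<dots> \<le> Fn (Suc n) \<gamma> x s"
      unfolding Fn_Suc by (rule B_mono[OF goodD(3)[OF G] Suc.IH Suc.prems])
    finally show ?case .
  qed
  then show ?thesis using x ga by (intro Fs_ge[OF x ga]) blast
qed

end



lemma boxB_cbox: "boxB k = cbox (0::real^'i) (\<chi> i. real k)"
  by (auto simp: boxB_def mem_box_cart)

lemma boxB_compact: "compact (boxB k :: (real^'i) set)"
  unfolding boxB_cbox by simp

lemma boxB_sets: "(boxB k :: (real^'i) set) \<in> sets lebesgue"
  unfolding boxB_cbox by (simp add: fmeasurableD)

lemma boxB_orth: "boxB k \<subseteq> nonneg_orth"
  by (auto simp: boxB_def nonneg_orth_def)

lemma boxB_sum: "\<gamma> \<in> boxB k \<Longrightarrow> (\<Sum>i\<in>UNIV. \<gamma>$i) \<le> real CARD('i) * real k" for \<gamma> :: "real^'i"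
  using sum_bounded_above[of UNIV "\<lambda>i. \<gamma>$i" "real k"] by (auto simp: boxB_def)

lemma l1_dist: "(\<Sum>i\<in>UNIV. \<bar>a$i - b$i\<bar>) \<le> real CARD('i) * dist a b" for a b :: "real^'i"
proof -
  have "\<bar>a$i - b$i\<bar> \<le> dist a b" for i
    using component_le_norm_cart[of "a - b" i] by (simp add: dist_norm)
  then show ?thesis using sum_bounded_above[of UNIV "\<lambda>i. \<bar>a$i - b$i\<bar>" "dist a b"] by simp
qed

lemma Linf_le:
  fixes f :: "real^'i \<Rightarrow> real"
  assumes "continuous_on (boxB k) f" "\<And>\<gamma>. \<gamma> \<in> boxB k \<Longrightarrow> \<bar>f \<gamma>\<bar> \<le> c"
  shows "Linf_norm k f \<le> ereal c"
  unfolding Linf_norm_def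
proof (rule esssup_I)
  have "f \<in> borel_measurable (lebesgue_on (boxB k))"
    by (rule continuous_imp_measurable_on_sets_lebesgue[OF assms(1) boxB_sets])
  then show "(\<lambda>\<gamma>. ereal \<bar>f \<gamma>\<bar>) \<in> borel_measurable (lebesgue_on (boxB k))" by measurable
  show "AE \<gamma> in lebesgue_on (boxB k). ereal \<bar>f \<gamma>\<bar> \<le> ereal c"
    by (rule AE_I2) (use assms(2) boxB_sets in auto)
qed

lemma in_Linf_I:
  fixes f :: "real^'i \<Rightarrow> real"
  assumes "continuous_on (boxB k) f" "\<And>\<gamma>. \<gamma> \<in> boxB k \<Longrightarrow> \<bar>f \<gamma>\<bar> \<le> c"
  shows "in_Linf k f"
  unfolding in_Linf_def
  using Linf_le[OF assms] continuous_imp_measurable_on_sets_lebesgue[OF assms(1) boxB_sets]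
  by (auto intro: le_less_trans)

lemma Linf_enn:
  fixes f :: "real^'i \<Rightarrow> real"
  assumes "continuous_on (boxB k) f" "\<And>\<gamma>. \<gamma> \<in> boxB k \<Longrightarrow> \<bar>f \<gamma>\<bar> \<le> c" "0 \<le> c"
  shows "e2ennreal (Linf_norm k f) = ennreal (enn2real (e2ennreal (Linf_norm k f)))"
    and "0 \<le> enn2real (e2ennreal (Linf_norm k f))"
    and "enn2real (e2ennreal (Linf_norm k f)) \<le> c"
proof -
  have le: "e2ennreal (Linf_norm k f) \<le> ennreal c"
    using e2ennreal_mono[OF Linf_le[OF assms(1,2)]] by simp
  then show "e2ennreal (Linf_norm k f) = ennreal (enn2real (e2ennreal (Linf_norm k f)))"
    by (simp add: le_less_trans)
  show "0 \<le> enn2real (e2ennreal (Linf_norm k f))" by simp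
  show "enn2real (e2ennreal (Linf_norm k f)) \<le> c" by (rule enn2real_leI[OF assms(3) le])
qed

context mdp begin

lemma V_bound:
  assumes fa: "feasible P \<beta> \<zeta> Aset p g gbar x s a" and x: "x \<in> Xset"
  shows "\<bar>contval P \<beta> \<zeta> x a r [s]\<bar> \<le> L" "\<bar>contval P \<beta> \<zeta> x a (g i) [s]\<bar> \<le> L"
proof -
  have b: "\<bar>contval P \<beta> \<zeta> x a u [s]\<bar> \<le> L" if ub: "bounded ((\<lambda>(x,a,s). u x a s) ` (Xset \<times> Aset \<times> UNIV))"
     and ul: "Ub u \<le> (1 - \<beta>) * L" for u
  proof -
    have "\<bar>contval P \<beta> \<zeta> x a u [s]\<bar> \<le> Ub u / (1 - \<beta>)" by (rule contval_bound[OF fa x _ _ ub]) auto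
    also have "\<dots> \<le> L" using ul \<beta>_lt by (simp add: divide_le_eq mult.commute)
    finally show ?thesis .
  qed
  show "\<bar>contval P \<beta> \<zeta> x a r [s]\<bar> \<le> L" using b[OF r_bdd Ub_r_le[OF x]] .
  show "\<bar>contval P \<beta> \<zeta> x a (g i) [s]\<bar> \<le> L" using b[OF g_bdd Ub_g_le[OF x, of i]] .
qed

lemma good_abs:
  assumes G: "good F" and x: "x \<in> Xset" and ga: "\<gamma> \<in> nonneg_orth"
  shows "\<bar>F \<gamma> x s\<bar> \<le> (1 + (\<Sum>i\<in>UNIV. \<gamma>$i)) * L"
proof -
  obtain a where fa: "feasible P \<beta> \<zeta> Aset p g gbar x s a" using feas_ex[OF x] by blast
  have lb: "contval P \<beta> \<zeta> x a r [s] + (\<Sum>i\<in>UNIV. \<gamma>$i * contval P \<beta> \<zeta> x a (g i) [s]) \<le> F \<gamma> x s"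
    using goodD(3)[OF G] x fa ga unfolding LBp_def by blast
  have ub: "F \<gamma> x s \<le> (1 + (\<Sum>i\<in>UNIV. \<gamma>$i)) * L"
    using goodD(4)[OF G] x ga unfolding UBp_def L_def by blast
  have "- L \<le> contval P \<beta> \<zeta> x a r [s]" using V_bound(1)[OF fa x] by linarith
  moreover have "(\<Sum>i\<in>UNIV. \<gamma>$i * (- L)) \<le> (\<Sum>i\<in>UNIV. \<gamma>$i * contval P \<beta> \<zeta> x a (g i) [s])"
  proof (rule sum_mono)
    fix i
    have "- L \<le> contval P \<beta> \<zeta> x a (g i) [s]" using V_bound(2)[OF fa x, of i] by linarith
    then show "\<gamma>$i * (- L) \<le> \<gamma>$i * contval P \<beta> \<zeta> x a (g i) [s]"
      using ga by (intro mult_left_mono) (auto simp: nonneg_orth_def)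
  qed
  moreover have "(\<Sum>i\<in>UNIV. \<gamma>$i * (- L)) = - ((\<Sum>i\<in>UNIV. \<gamma>$i) * L)"
    by (simp add: sum_distrib_right sum_negf)
  ultimately have "- ((1 + (\<Sum>i\<in>UNIV. \<gamma>$i)) * L) \<le> F \<gamma> x s"
    using lb by (simp only: distrib_right)
  then show ?thesis using ub by (intro abs_leI) linarith+
qed

lemma good_abs_box:
  assumes G: "good F" and x: "x \<in> Xset" and ga: "\<gamma> \<in> boxB k"
  shows "\<bar>F \<gamma> x s\<bar> \<le> (1 + real CARD('i) * real k) * L"
proof -
  have "\<bar>F \<gamma> x s\<bar> \<le> (1 + (\<Sum>i\<in>UNIV. \<gamma>$i)) * L" using good_abs[OF G x] ga boxB_orth by blast
  also have "\<dots> \<le> (1 + real CARD('i) * real k) * L"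
    using boxB_sum[OF ga] L_nonneg[OF x] by (intro mult_right_mono) auto
  finally show ?thesis .
qed

lemma good_lip:
  assumes G: "good F" and x: "x \<in> Xset" and g1: "\<gamma>1 \<in> nonneg_orth" and g2: "\<gamma>2 \<in> nonneg_orth"
  shows "\<bar>F \<gamma>1 x s - F \<gamma>2 x s\<bar> \<le> L * real CARD('i) * dist \<gamma>1 \<gamma>2"
proof -
  have "\<bar>F \<gamma>1 x s - F \<gamma>2 x s\<bar> \<le> L * (\<Sum>i\<in>UNIV. \<bar>\<gamma>1$i - \<gamma>2$i\<bar>)"
    using goodD(2)[OF G] x g1 g2 unfolding LIPp_def L_def by blast
  also have "\<dots> \<le> L * (real CARD('i) * dist \<gamma>1 \<gamma>2)"
    using l1_dist L_nonneg[OF x] by (intro mult_left_mono) auto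
  finally show ?thesis by (simp add: mult_ac)
qed

lemma good_cont:
  assumes G: "good F" and x: "x \<in> Xset"
  shows "continuous_on nonneg_orth (\<lambda>\<gamma>. F \<gamma> x s)"
  unfolding continuous_on_iff
proof (intro ballI allI impI)
  fix \<gamma> :: "real^'i" and e :: real assume ga: "\<gamma> \<in> nonneg_orth" and e: "0 < e"
  define K where "K = L * real CARD('i) + 1"
  have K: "0 < K" using L_nonneg[OF x] by (simp add: K_def add_nonneg_pos)
  show "\<exists>d>0. \<forall>\<gamma>'\<in>nonneg_orth. dist \<gamma>' \<gamma> < d \<longrightarrow> dist (F \<gamma>' x s) (F \<gamma> x s) < e"
  proof (intro exI[of _ "e / K"] conjI ballI impI)
    show "0 < e / K" using e K by simp
    fix \<gamma>' assume g': "\<gamma>' \<in> nonneg_orth" and d: "dist \<gamma>' \<gamma> < e / K"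
    have "dist (F \<gamma>' x s) (F \<gamma> x s) \<le> L * real CARD('i) * dist \<gamma>' \<gamma>"
      using good_lip[OF G x g' ga] by (simp add: dist_real_def)
    also have "\<dots> \<le> K * dist \<gamma>' \<gamma>" unfolding K_def by (simp add: distrib_right)
    also have "\<dots> < K * (e / K)" using d K by (intro mult_strict_left_mono)
    also have "\<dots> = e" using K by simp
    finally show "dist (F \<gamma>' x s) (F \<gamma> x s) < e" .
  qed
qed

lemma good_cont_box:
  assumes G: "good F" and x: "x \<in> Xset"
  shows "continuous_on (boxB k) (\<lambda>\<gamma>. F \<gamma> x s)"
  by (rule continuous_on_subset[OF good_cont[OF G x] boxB_orth])

end



lemma normM_real:
  fixes G :: "real^'i \<Rightarrow> 'x \<Rightarrow> 's::finite \<Rightarrow> real" and se :: "nat \<Rightarrow> 's" and xe :: "nat \<Rightarrow> 'x"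
    and D :: "nat \<Rightarrow> nat \<Rightarrow> nat \<Rightarrow> real" and M :: "nat \<Rightarrow> real"
  assumes eqD: "\<And>i j k. j \<in> Jx \<Longrightarrow> e2ennreal (Linf_norm (Suc k) (\<lambda>\<gamma>. G \<gamma> (xe j) (se i))) = ennreal (D i j k)"
    and D0: "\<And>i j k. j \<in> Jx \<Longrightarrow> 0 \<le> D i j k" and DM: "\<And>i j k. j \<in> Jx \<Longrightarrow> D i j k \<le> M k"
    and sM: "summable (\<lambda>k. (1/2)^Suc k * M k)" and M0: "\<And>k. 0 \<le> M k"
  shows "normM se xe Jx G = ennreal (\<Sum>i\<in>{1..CARD('s)}. (1/2)^i *
           (\<Sum>j. if j \<in> Jx then (1/2)^j * (\<Sum>k. (1/2)^Suc k * D i j k) else 0))"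
proof -
  define W where "W = (\<Sum>k. (1/2::real)^Suc k * M k)"
  have W0: "0 \<le> W" unfolding W_def by (rule suminf_nonneg[OF sM]) (simp add: M0)
  have sI: "summable (\<lambda>k. (1/2::real)^Suc k * D i j k)" if j: "j \<in> Jx" for i j
    by (rule summable_comparison_test'[OF sM]) (use D0[OF j] DM[OF j] in \<open>auto intro: mult_left_mono\<close>)
  have I0: "0 \<le> (\<Sum>k. (1/2::real)^Suc k * D i j k)" if j: "j \<in> Jx" for i j
    by (rule suminf_nonneg[OF sI[OF j]]) (use D0[OF j] in auto)
  have IW: "(\<Sum>k. (1/2::real)^Suc k * D i j k) \<le> W" if j: "j \<in> Jx" for i j
    unfolding W_def by (rule suminf_le[OF _ sI[OF j] sM]) (use DM[OF j] in \<open>auto intro: mult_left_mono\<close>)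
  define mid where "mid i = (\<Sum>j. if j \<in> Jx then (1/2::real)^j * (\<Sum>k. (1/2)^Suc k * D i j k) else 0)" for i
  have sJ: "summable (\<lambda>j. if j \<in> Jx then (1/2::real)^j * (\<Sum>k. (1/2)^Suc k * D i j k) else 0)" for i
  proof (rule summable_comparison_test'[where g="\<lambda>j. (1/2::real)^j * W"])
    show "summable (\<lambda>j. (1/2::real)^j * W)" by (intro summable_mult2 summable_geometric) simp
    fix j show "norm (if j \<in> Jx then (1/2::real)^j * (\<Sum>k. (1/2)^Suc k * D i j k) else 0) \<le> (1/2)^j * W"
      using I0 IW W0 by (auto intro: mult_left_mono order_trans[OF I0 IW])
  qed
  have M0: "0 \<le> mid i" for i
    unfolding mid_def by (rule suminf_nonneg[OF sJ]) (use I0 in auto)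
  have step1: "(\<Sum>k. ennreal ((1/2)^(Suc k)) * e2ennreal (Linf_norm (Suc k) (\<lambda>\<gamma>. G \<gamma> (xe j) (se i))))
      = ennreal (\<Sum>k. (1/2)^Suc k * D i j k)" if j: "j \<in> Jx" for i j
  proof -
    have "(\<Sum>k. ennreal ((1/2)^(Suc k)) * e2ennreal (Linf_norm (Suc k) (\<lambda>\<gamma>. G \<gamma> (xe j) (se i))))
       = (\<Sum>k. ennreal ((1/2)^(Suc k) * D i j k))"
      by (rule suminf_cong) (simp only: eqD[OF j] ennreal_mult''[OF D0[OF j]])
    also have "\<dots> = ennreal (\<Sum>k. (1/2)^Suc k * D i j k)"
      by (rule suminf_ennreal2[OF _ sI[OF j]]) (use D0[OF j] in simp)
    finally show ?thesis .
  qed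
  have step2: "(\<Sum>j. if j \<in> Jx then ennreal ((1/2)^j) *
               (\<Sum>k. ennreal ((1/2)^(Suc k)) * e2ennreal (Linf_norm (Suc k) (\<lambda>\<gamma>. G \<gamma> (xe j) (se i))))
             else 0) = ennreal (mid i)" for i
  proof -
    have "(\<Sum>j. if j \<in> Jx then ennreal ((1/2)^j) *
               (\<Sum>k. ennreal ((1/2)^(Suc k)) * e2ennreal (Linf_norm (Suc k) (\<lambda>\<gamma>. G \<gamma> (xe j) (se i))))
             else 0) = (\<Sum>j. ennreal (if j \<in> Jx then (1/2::real)^j * (\<Sum>k. (1/2)^Suc k * D i j k) else 0))"
    proof (rule suminf_cong)
      fix j
      show "(if j \<in> Jx then ennreal ((1/2)^j) *
               (\<Sum>k. ennreal ((1/2)^(Suc k)) * e2ennreal (Linf_norm (Suc k) (\<lambda>\<gamma>. G \<gamma> (xe j) (se i))))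
             else 0) = ennreal (if j \<in> Jx then (1/2::real)^j * (\<Sum>k. (1/2)^Suc k * D i j k) else 0)"
      proof (cases "j \<in> Jx")
        case True
        then show ?thesis by (simp only: if_True step1[OF True] ennreal_mult''[OF I0[OF True]])
      qed simp
    qed
    also have "\<dots> = ennreal (mid i)"
      unfolding mid_def by (rule suminf_ennreal2[OF _ sJ]) (use I0 in auto)
    finally show ?thesis .
  qed
  show ?thesis
    unfolding normM_def step2 mid_def[symmetric]
    by (subst sum_ennreal[symmetric]) (auto simp: M0 ennreal_mult'')
qed

lemma normM_tendsto:
  fixes G :: "nat \<Rightarrow> real^'i \<Rightarrow> 'x \<Rightarrow> 's::finite \<Rightarrow> real" and se :: "nat \<Rightarrow> 's" and xe :: "nat \<Rightarrow> 'x"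
    and D :: "nat \<Rightarrow> nat \<Rightarrow> nat \<Rightarrow> nat \<Rightarrow> real" and M :: "nat \<Rightarrow> real"
  assumes eqD: "\<And>n i j k. j \<in> Jx \<Longrightarrow> e2ennreal (Linf_norm (Suc k) (\<lambda>\<gamma>. G n \<gamma> (xe j) (se i))) = ennreal (D n i j k)"
    and D0: "\<And>n i j k. j \<in> Jx \<Longrightarrow> 0 \<le> D n i j k" and DM: "\<And>n i j k. j \<in> Jx \<Longrightarrow> D n i j k \<le> M k"
    and sM: "summable (\<lambda>k. (1/2)^Suc k * M k)" and M0: "\<And>k. 0 \<le> M k"
    and lim: "\<And>i j k. j \<in> Jx \<Longrightarrow> (\<lambda>n. D n i j k) \<longlonglongrightarrow> 0"
  shows "(\<lambda>n. normM se xe Jx (G n)) \<longlonglongrightarrow> 0"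
proof -
  define W where "W = (\<Sum>k. (1/2::real)^Suc k * M k)"
  have W0: "0 \<le> W" unfolding W_def by (rule suminf_nonneg[OF sM]) (simp add: M0)
  have sI: "summable (\<lambda>k. (1/2::real)^Suc k * D n i j k)" if j: "j \<in> Jx" for n i j
    by (rule summable_comparison_test'[OF sM]) (use D0[OF j] DM[OF j] in \<open>auto intro: mult_left_mono\<close>)
  have I0: "0 \<le> (\<Sum>k. (1/2::real)^Suc k * D n i j k)" if j: "j \<in> Jx" for n i j
    by (rule suminf_nonneg[OF sI[OF j]]) (use D0[OF j] in auto)
  have IW: "(\<Sum>k. (1/2::real)^Suc k * D n i j k) \<le> W" if j: "j \<in> Jx" for n i j
    unfolding W_def by (rule suminf_le[OF _ sI[OF j] sM]) (use DM[OF j] in \<open>auto intro: mult_left_mono\<close>)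
  have Ilim: "(\<lambda>n. \<Sum>k. (1/2::real)^Suc k * D n i j k) \<longlonglongrightarrow> 0" if j: "j \<in> Jx" for i j
  proof -
    have "(\<lambda>n. \<Sum>k. (1/2::real)^Suc k * D n i j k) \<longlonglongrightarrow> (\<Sum>k. (\<lambda>_. 0::real) k)"
    proof (rule conjunct2[OF conjunct2[OF tannerys_theorem[where M="\<lambda>k. (1/2)^Suc k * M k"]]])
      show "(\<lambda>n. (1/2::real)^Suc k * D n i j k) \<longlonglongrightarrow> 0" for k
        by (rule tendsto_mult_right_zero[OF lim[OF j]])
      show "\<forall>\<^sub>F (k, n) in at_top \<times>\<^sub>F sequentially. norm ((1/2::real)^Suc k * D n i j k) \<le> (1/2)^Suc k * M k"
        by (rule always_eventually) (use D0[OF j] DM[OF j] in \<open>auto intro: mult_left_mono\<close>)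
    qed (use sM in auto)
    then show ?thesis by simp
  qed
  have Mlim: "(\<lambda>n. \<Sum>j. if j \<in> Jx then (1/2::real)^j * (\<Sum>k. (1/2)^Suc k * D n i j k) else 0) \<longlonglongrightarrow> 0" for i
  proof -
    have "(\<lambda>n. \<Sum>j. if j \<in> Jx then (1/2::real)^j * (\<Sum>k. (1/2)^Suc k * D n i j k) else 0) \<longlonglongrightarrow> (\<Sum>k. (\<lambda>_. 0::real) k)"
    proof (rule conjunct2[OF conjunct2[OF tannerys_theorem[where M="\<lambda>j. (1/2)^j * W"]]])
      show "(\<lambda>n. if j \<in> Jx then (1/2::real)^j * (\<Sum>k. (1/2)^Suc k * D n i j k) else 0) \<longlonglongrightarrow> 0" for j
      proof (cases "j \<in> Jx")
        case True then show ?thesis using tendsto_mult_right_zero[OF Ilim[OF True], of "(1/2)^j"] by simp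
      qed simp
      show "\<forall>\<^sub>F (j, n) in at_top \<times>\<^sub>F sequentially. norm (if j \<in> Jx then (1/2::real)^j * (\<Sum>k. (1/2)^Suc k * D n i j k) else 0) \<le> (1/2)^j * W"
      proof (rule always_eventually, clarify)
        fix j n
        show "norm (if j \<in> Jx then (1/2::real)^j * (\<Sum>k. (1/2)^Suc k * D n i j k) else 0) \<le> (1/2)^j * W"
        proof (cases "j \<in> Jx")
          case True
          have "norm ((1/2::real)^j * (\<Sum>k. (1/2)^Suc k * D n i j k)) = (1/2::real)^j * (\<Sum>k. (1/2)^Suc k * D n i j k)"
            using I0[OF True] by (simp only: norm_mult real_norm_def abs_of_nonneg zero_le_power) simp
          also have "\<dots> \<le> (1/2)^j * W" by (rule mult_left_mono[OF IW[OF True]]) simp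
          finally show ?thesis using True by simp
        qed (use W0 in simp)
      qed
      show "summable (\<lambda>j. (1/2::real)^j * W)" by (intro summable_mult2 summable_geometric) simp
    qed auto
    then show ?thesis by simp
  qed
  have "(\<lambda>n. \<Sum>i\<in>{1..CARD('s)}. (1/2::real)^i *
           (\<Sum>j. if j \<in> Jx then (1/2)^j * (\<Sum>k. (1/2)^Suc k * D n i j k) else 0)) \<longlonglongrightarrow> 0"
    by (intro tendsto_null_sum tendsto_mult_right_zero Mlim)
  then have "(\<lambda>n. ennreal (\<Sum>i\<in>{1..CARD('s)}. (1/2::real)^i *
           (\<Sum>j. if j \<in> Jx then (1/2)^j * (\<Sum>k. (1/2)^Suc k * D n i j k) else 0))) \<longlonglongrightarrow> ennreal 0"
    by (rule tendsto_ennrealI)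
  moreover have "normM se xe Jx (G n) = ennreal (\<Sum>i\<in>{1..CARD('s)}. (1/2::real)^i *
           (\<Sum>j. if j \<in> Jx then (1/2)^j * (\<Sum>k. (1/2)^Suc k * D n i j k) else 0))" for n
    by (rule normM_real[where G="G n" and D="D n" and M=M, OF eqD D0 DM sM M0])
  ultimately show ?thesis by simp
qed




lemma summable_lin_geom:
  fixes c :: real assumes c: "0 \<le> c"
  shows "summable (\<lambda>k. (1/2)^Suc k * (1 + c * real (Suc k)))"
proof (rule summable_ratio_test[where c="3/4" and N=1])
  fix n :: nat assume n: "1 \<le> n"
  have cn: "c \<le> c * real n" using c n by (simp add: mult_le_cancel_left1)
  have key: "2 * (1 + c * real (Suc (Suc n))) \<le> 3 * (1 + c * real (Suc n))"
    using cn by (simp add: algebra_simps)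
  have pos: "0 \<le> (1/2::real)^n / 8" by simp
  have "(1/2::real)^Suc (Suc n) * (1 + c * real (Suc (Suc n))) = (1/2)^n / 8 * (2 * (1 + c * real (Suc (Suc n))))"
    by (simp add: field_simps)
  also have "\<dots> \<le> (1/2)^n / 8 * (3 * (1 + c * real (Suc n)))"
    by (rule mult_left_mono[OF key pos])
  also have "\<dots> = 3/4 * ((1/2)^Suc n * (1 + c * real (Suc n)))"
    by (simp add: field_simps)
  finally show "norm ((1/2::real)^Suc (Suc n) * (1 + c * real (Suc (Suc n)))) \<le> 3/4 * norm ((1/2::real)^Suc n * (1 + c * real (Suc n)))"
    using c by (simp add: abs_of_nonneg)
qed simp

context mdp begin

lemma unif_conv:
  assumes x: "x \<in> Xset" and e: "0 < e"
  shows "eventually (\<lambda>n. \<forall>\<gamma>\<in>boxB k. \<bar>Fn n \<gamma> x s - Fs \<gamma> x s\<bar> \<le> e) sequentially"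
proof -
  define K where "K = 2 * L * real CARD('i) + 1"
  have K: "0 < K" using L_nonneg[OF x] by (simp add: K_def add_nonneg_pos)
  define d where "d = e / (2 * K)"
  have d: "0 < d" using e K by (simp add: d_def)
  obtain T :: "(real^'i) set" where T: "T \<subseteq> boxB k" "finite T" "boxB k \<subseteq> (\<Union>q\<in>T. ball q d)"
    by (rule compactE_image[OF boxB_compact, of "boxB k" "\<lambda>q. ball q d"]) (use d in auto)
  have ev: "eventually (\<lambda>n. \<forall>q\<in>T. dist (Fn n q x s) (Fs q x s) < e / 2) sequentially"
  proof (rule eventually_ball_finite[OF T(2)], rule ballI)
    fix q assume q: "q \<in> T"
    then have qo: "q \<in> nonneg_orth" using T(1) boxB_orth by blast
    show "eventually (\<lambda>n. dist (Fn n q x s) (Fs q x s) < e / 2) sequentially"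
      by (rule tendstoD[OF Fn_lim[OF x qo]]) (use e in simp)
  qed
  show ?thesis
  proof (rule eventually_mono[OF ev], intro ballI)
    fix n and \<gamma> :: "real^'i"
    assume H: "\<forall>q\<in>T. dist (Fn n q x s) (Fs q x s) < e / 2" and ga: "\<gamma> \<in> boxB k"
    obtain q where q: "q \<in> T" "dist q \<gamma> < d" using T(3) ga by auto
    have qo: "q \<in> nonneg_orth" using q T(1) boxB_orth by blast
    have go: "\<gamma> \<in> nonneg_orth" using ga boxB_orth by blast
    have h1: "\<bar>Fn n q x s - Fs q x s\<bar> < e / 2" using H q(1) by (simp add: dist_real_def)
    have h2: "\<bar>Fn n \<gamma> x s - Fn n q x s\<bar> \<le> L * real CARD('i) * dist \<gamma> q"
      by (rule good_lip[OF Fn_good x go qo])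
    have h3: "\<bar>Fs \<gamma> x s - Fs q x s\<bar> \<le> L * real CARD('i) * dist \<gamma> q"
      by (rule good_lip[OF Fs_good x go qo])
    have "2 * (L * real CARD('i) * dist \<gamma> q) \<le> K * dist \<gamma> q"
      unfolding K_def by (simp add: algebra_simps)
    also have "\<dots> \<le> K * d" using q(2) K by (simp add: dist_commute)
    also have "\<dots> = e / 2" using K by (simp add: d_def)
    finally show "\<bar>Fn n \<gamma> x s - Fs \<gamma> x s\<bar> \<le> e" using h1 h2 h3 by linarith
  qed
qed

lemma good_in_M:
  assumes G: "good F" and xe: "bij_betw xe Jx Xset"
  shows "in_M se xe Jx Xset F"
  unfolding in_M_def
proof (intro conjI ballI allI impI)
  fix x s and k :: nat assume x: "x \<in> Xset"
  show "in_Linf k (\<lambda>\<gamma>. F \<gamma> x s)"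
    by (rule in_Linf_I[OF good_cont_box[OF G x] good_abs_box[OF G x]])
next
  define M where "M k = (1 + real CARD('i) * real (Suc k)) * \<bar>L\<bar>" for k
  define D where "D i j k = enn2real (e2ennreal (Linf_norm (Suc k) (\<lambda>\<gamma>. F \<gamma> (xe j) (se i))))" for i j k
  have xj: "j \<in> Jx \<Longrightarrow> xe j \<in> Xset" for j using xe by (auto simp: bij_betw_def)
  have bd: "\<bar>F \<gamma> (xe j) (se i)\<bar> \<le> M k" if j: "j \<in> Jx" and ga: "\<gamma> \<in> boxB (Suc k)" for i j k \<gamma>
    using good_abs_box[OF G xj[OF j] ga, of "se i"] unfolding M_def
    by (rule order_trans) (intro mult_left_mono, auto)
  have M0: "0 \<le> M k" for k unfolding M_def by simp
  have "normM se xe Jx F = ennreal (\<Sum>i\<in>{1..CARD('s)}. (1/2)^i *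
           (\<Sum>j. if j \<in> Jx then (1/2)^j * (\<Sum>k. (1/2)^Suc k * D i j k) else 0))"
  proof (rule normM_real[where M=M])
    fix i j k assume j: "j \<in> Jx"
    note le = Linf_enn[OF good_cont_box[OF G xj[OF j]] bd[OF j] M0]
    show "e2ennreal (Linf_norm (Suc k) (\<lambda>\<gamma>. F \<gamma> (xe j) (se i))) = ennreal (D i j k)"
      unfolding D_def by (rule le(1))
    show "0 \<le> D i j k" unfolding D_def by (rule le(2))
    show "D i j k \<le> M k" unfolding D_def by (rule le(3))
  next
    show "summable (\<lambda>k. (1/2)^Suc k * M k)" unfolding M_def
      using summable_mult2[OF summable_lin_geom[of "real CARD('i)"], of "\<bar>L\<bar>"] by (simp add: mult_ac)
  qed (rule M0)
  then show "normM se xe Jx F < \<infinity>" by simp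
qed


lemma Fn_conv:
  assumes xe: "bij_betw xe Jx Xset"
  shows "(\<lambda>n. normM se xe Jx (\<lambda>\<gamma> x s. Fn n \<gamma> x s - Fs \<gamma> x s)) \<longlonglongrightarrow> 0"
proof -
  define M where "M k = 2 * ((1 + real CARD('i) * real (Suc k)) * \<bar>L\<bar>)" for k
  define D where "D n i j k = enn2real (e2ennreal (Linf_norm (Suc k) (\<lambda>\<gamma>. Fn n \<gamma> (xe j) (se i) - Fs \<gamma> (xe j) (se i))))" for n i j k
  have xj: "j \<in> Jx \<Longrightarrow> xe j \<in> Xset" for j using xe by (auto simp: bij_betw_def)
  have bd1: "\<bar>F \<gamma> (xe j) (se i)\<bar> \<le> (1 + real CARD('i) * real (Suc k)) * \<bar>L\<bar>"
    if G: "good F" and j: "j \<in> Jx" and ga: "\<gamma> \<in> boxB (Suc k)" for F i j k \<gamma>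
    using good_abs_box[OF G xj[OF j] ga, of "se i"]
    by (rule order_trans) (intro mult_left_mono, auto)
  have bd: "\<bar>Fn n \<gamma> (xe j) (se i) - Fs \<gamma> (xe j) (se i)\<bar> \<le> M k" if j: "j \<in> Jx" and ga: "\<gamma> \<in> boxB (Suc k)" for n i j k \<gamma>
    using bd1[OF Fn_good j ga, of n i] bd1[OF Fs_good j ga, of i] unfolding M_def by linarith
  have M0: "0 \<le> M k" for k unfolding M_def by simp
  have cont: "continuous_on (boxB (Suc k)) (\<lambda>\<gamma>. Fn n \<gamma> (xe j) (se i) - Fs \<gamma> (xe j) (se i))" if j: "j \<in> Jx" for n i j k
    by (intro continuous_on_diff good_cont_box[OF Fn_good xj[OF j]] good_cont_box[OF Fs_good xj[OF j]])
  show ?thesis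
  proof (rule normM_tendsto[where D=D and M=M])
    fix n i j k assume j: "j \<in> Jx"
    note le = Linf_enn[OF cont[OF j] bd[OF j] M0]
    show "e2ennreal (Linf_norm (Suc k) (\<lambda>\<gamma>. Fn n \<gamma> (xe j) (se i) - Fs \<gamma> (xe j) (se i))) = ennreal (D n i j k)"
      unfolding D_def by (rule le(1))
    show "0 \<le> D n i j k" unfolding D_def by (rule le(2))
    show "D n i j k \<le> M k" unfolding D_def by (rule le(3))
  next
    show "summable (\<lambda>k. (1/2)^Suc k * M k)" unfolding M_def
      using summable_mult2[OF summable_lin_geom[of "real CARD('i)"], of "2 * \<bar>L\<bar>"] by (simp add: mult_ac)
  next
    fix k show "0 \<le> M k" by (rule M0)
  next
    fix i j k assume j: "j \<in> Jx"
    show "(\<lambda>n. D n i j k) \<longlonglongrightarrow> 0"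
      unfolding tendsto_iff
    proof (intro allI impI)
      fix e :: real assume e: "0 < e"
      have ev: "eventually (\<lambda>n. \<forall>\<gamma>\<in>boxB (Suc k). \<bar>Fn n \<gamma> (xe j) (se i) - Fs \<gamma> (xe j) (se i)\<bar> \<le> e / 2) sequentially"
        by (rule unif_conv[OF xj[OF j]]) (use e in simp)
      show "eventually (\<lambda>n. dist (D n i j k) 0 < e) sequentially"
      proof (rule eventually_mono[OF ev])
        fix n assume H: "\<forall>\<gamma>\<in>boxB (Suc k). \<bar>Fn n \<gamma> (xe j) (se i) - Fs \<gamma> (xe j) (se i)\<bar> \<le> e / 2"
        note le = Linf_enn[OF cont[OF j, of k n i], of "e/2"]
        have "D n i j k \<le> e / 2" unfolding D_def by (rule le(3)) (use H e in auto)
        moreover have "0 \<le> D n i j k" unfolding D_def by (rule le(2)) (use H e in auto)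
        ultimately show "dist (D n i j k) 0 < e" using e by (simp add: dist_real_def)
      qed
    qed
  qed
qed

lemma main_loc:
  assumes xe: "bij_betw xe Jx Xset"
  shows "\<exists>Fs. in_N se xe Jx Xset P \<beta> \<zeta> Aset p r g gbar Fs
           \<and> (\<lambda>n. normM se xe Jx (\<lambda>\<gamma> x s. ((bellman P \<beta> \<zeta> Aset p r g gbar ^^ n) (\<lambda>\<gamma> x s. (1 + (\<Sum>i\<in>UNIV. \<gamma>$i)) * Lconst Xset Aset \<beta> r g)) \<gamma> x s - Fs \<gamma> x s))
               \<longlonglongrightarrow> 0
           \<and> (\<forall>\<gamma>\<in>nonneg_orth. \<forall>x\<in>Xset. \<forall>s. bellman P \<beta> \<zeta> Aset p r g gbar Fs \<gamma> x s = Fs \<gamma> x s)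
           \<and> (\<forall>F. in_N se xe Jx Xset P \<beta> \<zeta> Aset p r g gbar F
                  \<and> (\<forall>\<gamma>\<in>nonneg_orth. \<forall>x\<in>Xset. \<forall>s. bellman P \<beta> \<zeta> Aset p r g gbar F \<gamma> x s = F \<gamma> x s)
                  \<longrightarrow> (\<forall>\<gamma>\<in>nonneg_orth. \<forall>x\<in>Xset. \<forall>s. F \<gamma> x s \<le> Fs \<gamma> x s))"
proof (intro exI[of _ Fs] conjI allI impI ballI)
  show "in_N se xe Jx Xset P \<beta> \<zeta> Aset p r g gbar Fs"
    unfolding in_N_iff using good_in_M[OF Fs_good xe] Fs_good unfolding good_def by blast
  show "(\<lambda>n. normM se xe Jx (\<lambda>\<gamma> x s. ((bellman P \<beta> \<zeta> Aset p r g gbar ^^ n) (\<lambda>\<gamma> x s. (1 + (\<Sum>i\<in>UNIV. \<gamma>$i)) * Lconst Xset Aset \<beta> r g)) \<gamma> x s - Fs \<gamma> x s)) \<longlonglongrightarrow> 0"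
    using Fn_conv[OF xe] unfolding Fn_def F0_def .
  show "bellman P \<beta> \<zeta> Aset p r g gbar Fs \<gamma> x s = Fs \<gamma> x s" if "\<gamma> \<in> nonneg_orth" "x \<in> Xset" for \<gamma> x s
    using Fs_fix that by blast
  fix F :: "real^'i \<Rightarrow> 'x \<Rightarrow> 's \<Rightarrow> real" and \<gamma> :: "real^'i" and x s
  assume H: "in_N se xe Jx Xset P \<beta> \<zeta> Aset p r g gbar F
                  \<and> (\<forall>\<gamma>\<in>nonneg_orth. \<forall>x\<in>Xset. \<forall>s. bellman P \<beta> \<zeta> Aset p r g gbar F \<gamma> x s = F \<gamma> x s)"
    and ga: "\<gamma> \<in> nonneg_orth" and x: "x \<in> Xset"
  have G: "good F" using H unfolding in_N_iff good_def by blast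
  show "F \<gamma> x s \<le> Fs \<gamma> x s"
    by (rule Fs_max[OF G _ x ga]) (use H in blast)
qed

end

theorem theorem3p6:
  fixes P :: "'s::finite \<Rightarrow> 's \<Rightarrow> real"
    and Aset :: "(real^'n) set"
    and Xset :: "(real^'m) set"
    and \<zeta> :: "real^'m \<Rightarrow> real^'n \<Rightarrow> 's \<Rightarrow> real^'m"
    and p r :: "real^'m \<Rightarrow> real^'n \<Rightarrow> 's \<Rightarrow> real"
    and g :: "'i::finite \<Rightarrow> real^'m \<Rightarrow> real^'n \<Rightarrow> 's \<Rightarrow> real"
    and gbar :: "'i \<Rightarrow> real"
    and \<beta> :: real
    and se :: "nat \<Rightarrow> 's"
    and xe :: "nat \<Rightarrow> real^'m"
    and Jx :: "nat set"
    and F0 :: "real^'i \<Rightarrow> real^'m \<Rightarrow> 's \<Rightarrow> real"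
  assumes P_pos: "\<And>s s'. 0 < P s s'"
    and P_sum: "\<And>s. (\<Sum>s'\<in>UNIV. P s s') = 1"
    and A_fin: "finite Aset"
    and X_count: "countable Xset"
    and \<zeta>_X: "\<And>x a s. x \<in> Xset \<Longrightarrow> a \<in> Aset \<Longrightarrow> \<zeta> x a s \<in> Xset"
    and r_bdd: "bounded ((\<lambda>(x,a,s). r x a s) ` (Xset \<times> Aset \<times> UNIV))"
    and g_bdd: "\<And>i. bounded ((\<lambda>(x,a,s). g i x a s) ` (Xset \<times> Aset \<times> UNIV))"
    and \<beta>: "0 < \<beta>" "\<beta> < 1"
    and se_enum: "bij_betw se {1..CARD('s)} UNIV"
    and xe_enum: "bij_betw xe Jx Xset"
    and Jx_form: "Jx = {1..} \<or> (\<exists>k. Jx = {1..k})"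
    and feasible_exists: "\<And>x0 s0. x0 \<in> Xset \<Longrightarrow> \<exists>a. feasible P \<beta> \<zeta> Aset p g gbar x0 s0 a"
    and F0_def: "F0 = (\<lambda>\<gamma> x s. (1 + (\<Sum>i\<in>UNIV. \<gamma>$i)) * Lconst Xset Aset \<beta> r g)"
  shows "\<exists>Fs. in_N se xe Jx Xset P \<beta> \<zeta> Aset p r g gbar Fs
           \<and> (\<lambda>n. normM se xe Jx (\<lambda>\<gamma> x s. ((bellman P \<beta> \<zeta> Aset p r g gbar ^^ n) F0) \<gamma> x s - Fs \<gamma> x s))
               \<longlonglongrightarrow> 0
           \<and> (\<forall>\<gamma>\<in>nonneg_orth. \<forall>x\<in>Xset. \<forall>s. bellman P \<beta> \<zeta> Aset p r g gbar Fs \<gamma> x s = Fs \<gamma> x s)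
           \<and> (\<forall>F. in_N se xe Jx Xset P \<beta> \<zeta> Aset p r g gbar F
                  \<and> (\<forall>\<gamma>\<in>nonneg_orth. \<forall>x\<in>Xset. \<forall>s. bellman P \<beta> \<zeta> Aset p r g gbar F \<gamma> x s = F \<gamma> x s)
                  \<longrightarrow> (\<forall>\<gamma>\<in>nonneg_orth. \<forall>x\<in>Xset. \<forall>s. F \<gamma> x s \<le> Fs \<gamma> x s))"
  proof -
  note F0eq = F0_def
  interpret mdp P \<beta> \<zeta> Aset Xset p r g gbar
    by unfold_locales (use P_pos P_sum A_fin \<zeta>_X r_bdd g_bdd \<beta> feasible_exists in auto)
  show ?thesis unfolding F0eq by (rule main_loc[OF xe_enum])
qed

end
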